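(* Assume $(H_1)$ (for the single vector field $F_u=f+v_u$) and let $\vartheta\in\mathcal P_1(\mathbb R^n)$. Then for every map $\mathbf u:[0,T]\times\mathcal P(\mathbb R^n)\to U$ (arbitrary) the set $\mathfrak S_1(\mathbf u)$ of $\mathbf u$-sampling solutions is nonempty, and for every Borel measurable map $\mathfrak u:[0,T]\times\mathcal P(\mathbb R^n)\to\mathcal U$ the set $\mathfrak S_2(\mathfrak u)$ of $\mathfrak u$-sampling solutions is nonempty.
   Context: Setting: $T>0$, $U\subset\mathbb R^m$ compact, $\mathcal U=L_\infty([0,T];U)$, $f:\mathbb R^n\to\mathbb R^n$, $v:\mathbb R^n\times U\to\mathbb R^n$, $F_u=f+v_u$. Hypothesis $(H_1)$: $F_u(x)$ is continuous in $(x,u)$ and there is $C>0$ with $|F_u(x)|\le C(1+|x|)$ and $|F_u(x)-F_u(y)|\le C|x-y|$ for all $u\in U$, $x,y$. $\mathcal P_1(\mathbb R^n)$: probability measures with finite first moment, metrized by the 1-Wasserstein distance; $C([0,T];\mathcal P_1)$ carries the sup-metric. For $\tau\in[0,T]$, a control $u$ and $\rho\in\mathcal P_1$, $\mu[u](\tau,\rho)$ denotes the distributional solution on $[\tau,T]$ of $\partial_t\mu_t+\nabla\cdot((f+v_{u(t)})\mu_t)=0$, $\mu_\tau=\rho$ (the push-forward of $\rho$ by the flow of $\dot x=F_{u(t)}(x)$ started at time $\tau$). Partition: $\pi=\{t_k\}_{k=0}^K$ with $0=t_0<t_1<\dots<t_K=T$, $\mathrm{diam}(\pi)=\max_k(t_k-t_{k-1})$.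 $\mathbf u$-sampling polygon: set $\mu^\pi_0=\vartheta$ and recursively, for $k=1,\dots,K$, on $[t_{k-1},t_k]$ let $\mu^\pi_t=\mu[\bar w_k](t_{k-1},\mu^\pi_{t_{k-1}})_t$ with the constant control $\bar w_k\equiv\mathbf u_{t_{k-1}}[\mu^\pi_{t_{k-1}}]\in U$. $\mathfrak u$-sampling polygon: the same, but on $[t_{k-1},t_k]$ use the open-loop control $t\mapsto\mathfrak u_t[\mu^\pi_{t_{k-1}}]$ (the value at $t$ of the control $\mathfrak u[\mu^\pi_{t_{k-1}}]\in\mathcal U$ associated with time $t_{k-1}$; i.e. $\mathfrak u_{(\cdot)}$ evaluated as a short-term program). A $\mathbf u$-sampling solution (resp. $\mathfrak u$-sampling solution) is any limit in $C([0,T];\mathcal P_1)$ of a sequence of $\mathbf u$- (resp. $\mathfrak u$-) sampling polygons $\mu^{\pi_j}$ with $\mathrm{diam}(\pi_j)\to0$; $\mathfrak S_1(\mathbf u)$ and $\mathfrak S_2(\mathfrak u)$ are the sets of all such limits. *)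

theory Defs
  imports "HOL-Analysis.Analysis" "HOL-Probability.Probability"
begin

(* Space R^n is an abstract euclidean_space 'a, control values live in euclidean_space 'b (R^m).
   A vector field depending on a control value: F :: 'a => 'b => 'a, F x u = F_u(x). *)

definition P1 :: "'a::euclidean_space measure set" where
  "P1 = {\<mu>. prob_space \<mu> \<and> sets \<mu> = sets borel \<and> integrable \<mu> norm}"

definition couplings :: "'a::euclidean_space measure \<Rightarrow> 'a measure \<Rightarrow> ('a \<times> 'a) measure set" where
  "couplings \<mu> \<nu> = {\<gamma>. sets \<gamma> = sets (borel \<Otimes>\<^sub>M borel) \<and>
      distr \<gamma> borel fst = \<mu> \<and> distr \<gamma> borel snd = \<nu>}"

definition W1 :: "'a::euclidean_space measure \<Rightarrow> 'a measure \<Rightarrow> ennreal" where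
  "W1 \<mu> \<nu> = (INF \<gamma>\<in>couplings \<mu> \<nu>. \<integral>\<^sup>+ z. ennreal (dist (fst z) (snd z)) \<partial>\<gamma>)"

text \<open>Membership in C([0,T]; P_1) (only the values on [0,T] matter).\<close>
definition CP1 :: "real \<Rightarrow> (real \<Rightarrow> 'a::euclidean_space measure) set" where
  "CP1 T = {\<mu>. (\<forall>t\<in>{0..T}. \<mu> t \<in> P1) \<and>
      (\<forall>t\<in>{0..T}. ((\<lambda>s. W1 (\<mu> s) (\<mu> t)) \<longlongrightarrow> 0) (at t within {0..T}))}"

text \<open>The control set \<open>\<U> = L\<^sub>\<infinity>([0,T];U)\<close>, represented by (Lebesgue measurable) U-valued
  functions on [0,T] (values outside [0,T] are irrelevant).\<close>
definition ctrl_space :: "real \<Rightarrow> 'b::euclidean_space set \<Rightarrow> (real \<Rightarrow> 'b) set" where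
  "ctrl_space T U = {w. w \<in> borel_measurable (restrict_space lebesgue {0..T}) \<and> (\<forall>s\<in>{0..T}. w s \<in> U)}"

text \<open>Borel sigma-algebra on \<open>\<U>\<close>: generated by the maps \<open>w \<mapsto> \<integral>\<^sub>0\<^sup>t w\<close>, \<open>t \<in> [0,T]\<close>
  (this is the Borel sigma-algebra of the weak-* topology, equivalently of the L1 topology,
  on the bounded set \<open>L\<^sub>\<infinity>([0,T];U)\<close>).\<close>
definition ctrl_alg :: "real \<Rightarrow> 'b::euclidean_space set \<Rightarrow> (real \<Rightarrow> 'b) measure" where
  "ctrl_alg T U = sigma (ctrl_space T U)
     {{w \<in> ctrl_space T U. integral {0..t} w \<in> B} | t B. t \<in> {0..T} \<and> B \<in> sets borel}"

definition traj :: "('a::euclidean_space \<Rightarrow> 'b \<Rightarrow> 'a) \<Rightarrow> (real \<Rightarrow> 'b) \<Rightarrow> real \<Rightarrow> real \<Rightarrow> 'a \<Rightarrow> (real \<Rightarrow> 'a) \<Rightarrow> bool" where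
  "traj F w \<tau> t x0 \<gamma> \<longleftrightarrow> continuous_on {\<tau>..t} \<gamma> \<and>
     (\<forall>s\<in>{\<tau>..t}. (\<lambda>r. F (\<gamma> r) (w r)) integrable_on {\<tau>..s} \<and>
                   \<gamma> s = x0 + integral {\<tau>..s} (\<lambda>r. F (\<gamma> r) (w r)))"

definition flow :: "('a::euclidean_space \<Rightarrow> 'b \<Rightarrow> 'a) \<Rightarrow> (real \<Rightarrow> 'b) \<Rightarrow> real \<Rightarrow> real \<Rightarrow> 'a \<Rightarrow> 'a" where
  "flow F w \<tau> t x = (THE y. \<exists>\<gamma>. traj F w \<tau> t x \<gamma> \<and> \<gamma> t = y)"

definition mu_sol :: "('a::euclidean_space \<Rightarrow> 'b \<Rightarrow> 'a) \<Rightarrow> (real \<Rightarrow> 'b) \<Rightarrow> real \<Rightarrow> 'a measure \<Rightarrow> real \<Rightarrow> 'a measure" where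
  "mu_sol F w \<tau> \<rho> t = distr \<rho> borel (flow F w \<tau> t)"

definition is_partition :: "real \<Rightarrow> nat \<Rightarrow> (nat \<Rightarrow> real) \<Rightarrow> bool" where
  "is_partition T K p \<longleftrightarrow> 0 < K \<and> p 0 = 0 \<and> p K = T \<and> (\<forall>k<K. p k < p (Suc k))"

definition diam :: "nat \<Rightarrow> (nat \<Rightarrow> real) \<Rightarrow> real" where
  "diam K p = Max {p (Suc k) - p k | k. k < K}"

text \<open>G t \<mu> is the control used on the sampling interval starting at node time t when the
  state at that node is \<mu>.\<close>
fun node :: "('a::euclidean_space \<Rightarrow> 'b \<Rightarrow> 'a) \<Rightarrow> (real \<Rightarrow> 'a measure \<Rightarrow> (real \<Rightarrow> 'b)) \<Rightarrow>
    'a measure \<Rightarrow> (nat \<Rightarrow> real) \<Rightarrow> nat \<Rightarrow> 'a measure" where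
  "node F G \<theta> p 0 = \<theta>"
| "node F G \<theta> p (Suc k) =
     mu_sol F (G (p k) (node F G \<theta> p k)) (p k) (node F G \<theta> p k) (p (Suc k))"

definition polygon :: "('a::euclidean_space \<Rightarrow> 'b \<Rightarrow> 'a) \<Rightarrow> (real \<Rightarrow> 'a measure \<Rightarrow> (real \<Rightarrow> 'b)) \<Rightarrow>
    'a measure \<Rightarrow> nat \<Rightarrow> (nat \<Rightarrow> real) \<Rightarrow> real \<Rightarrow> 'a measure" where
  "polygon F G \<theta> K p t =
     (let k = (GREATEST k. k < K \<and> p k \<le> t) in
        mu_sol F (G (p k) (node F G \<theta> p k)) (p k) (node F G \<theta> p k) t)"

definition sampling_solutions :: "('a::euclidean_space \<Rightarrow> 'b \<Rightarrow> 'a) \<Rightarrow> (real \<Rightarrow> 'a measure \<Rightarrow> (real \<Rightarrow> 'b)) \<Rightarrow>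
    'a measure \<Rightarrow> real \<Rightarrow> (real \<Rightarrow> 'a measure) set" where
  "sampling_solutions F G \<theta> T = {\<mu>. \<mu> \<in> CP1 T \<and>
     (\<exists>K P. (\<forall>j. is_partition T (K j) (P j)) \<and> (\<lambda>j. diam (K j) (P j)) \<longlonglongrightarrow> 0 \<and>
        (\<lambda>j. \<Squnion>t\<in>{0..T}. W1 (polygon F G \<theta> (K j) (P j) t) (\<mu> t)) \<longlonglongrightarrow> 0)}"

definition S1 :: "('a::euclidean_space \<Rightarrow> 'b \<Rightarrow> 'a) \<Rightarrow> (real \<Rightarrow> 'a measure \<Rightarrow> 'b) \<Rightarrow>
    'a measure \<Rightarrow> real \<Rightarrow> (real \<Rightarrow> 'a measure) set" where
  "S1 F u \<theta> T = sampling_solutions F (\<lambda>t \<mu> s. u t \<mu>) \<theta> T"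

definition S2 :: "('a::euclidean_space \<Rightarrow> 'b \<Rightarrow> 'a) \<Rightarrow> (real \<Rightarrow> 'a measure \<Rightarrow> (real \<Rightarrow> 'b)) \<Rightarrow>
    'a measure \<Rightarrow> real \<Rightarrow> (real \<Rightarrow> 'a measure) set" where
  "S2 F uu \<theta> T = sampling_solutions F uu \<theta> T"

end

theory Submission
  imports Defs "HOL-Library.Diagonal_Subsequence"
begin


lemma gronwall:
  fixes d :: "real \<Rightarrow> real"
  assumes cont: "continuous_on {a..b} d" and L: "L \<ge> 0"
    and ineq: "\<And>s. s \<in> {a..b} \<Longrightarrow> d s \<le> A + L * integral {a..s} d"
    and s: "s \<in> {a..b}"
  shows "d s \<le> A * exp (L * (s - a))"
proof -
  define I where "I u = integral {a..u} d" for u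
  define \<phi> where "\<phi> u = exp (- L * (u - a)) * (A + L * I u)" for u
  have Icont: "continuous_on {a..b} I"
    unfolding I_def by (rule indefinite_integral_continuous_1[OF integrable_continuous_interval[OF cont]])
  have sab: "a \<le> s" "s \<le> b" using s by auto
  have "\<phi> s \<le> \<phi> a"
  proof (rule DERIV_nonpos_imp_decreasing_open[OF sab(1)])
    fix u assume u: "a < u" "u < s"
    have "(I has_vector_derivative d u) (at u within {a..b})"
      unfolding I_def by (rule integral_has_vector_derivative[OF cont]) (use u sab in auto)
    moreover have "at u within {a..b} = at u" using u sab by (intro at_within_Icc_at) auto
    ultimately have dI: "(I has_real_derivative d u) (at u)"
      by (simp add: has_real_derivative_iff_has_vector_derivative)
    have "(\<phi> has_real_derivative
        (exp (- L * (u - a)) * (- L)) * (A + L * I u) + exp (- L * (u - a)) * (L * d u)) (at u)"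
      unfolding \<phi>_def
      by (auto intro!: derivative_eq_intros dI)
    moreover have "(exp (- L * (u - a)) * (- L)) * (A + L * I u) + exp (- L * (u - a)) * (L * d u)
        = L * exp (- L * (u - a)) * (d u - (A + L * I u))"
      by (simp add: algebra_simps)
    moreover have "d u - (A + L * I u) \<le> 0" using ineq[of u] u sab unfolding I_def by auto
    ultimately show "\<exists>y. (\<phi> has_real_derivative y) (at u) \<and> y \<le> 0"
      using L by (intro exI[of _ "L * exp (- L * (u - a)) * (d u - (A + L * I u))"])
        (auto intro!: mult_nonneg_nonpos)
  next
    show "continuous_on {a..s} \<phi>"
      unfolding \<phi>_def
      by (intro continuous_intros continuous_on_subset[OF Icont]) (use sab in auto)
  qed
  moreover have "\<phi> a = A" unfolding \<phi>_def I_def by simp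
  ultimately have "\<phi> s \<le> A" by simp
  then have "exp (- L * (s - a)) * (A + L * I s) \<le> A" unfolding \<phi>_def .
  then have "exp (L * (s - a)) * (exp (- L * (s - a)) * (A + L * I s)) \<le> exp (L * (s - a)) * A"
    by (intro mult_left_mono) auto
  then have "A + L * I s \<le> exp (L * (s - a)) * A"
    by (simp add: mult.assoc[symmetric] exp_add[symmetric])
  moreover have "exp (L * (s - a)) * A = A * exp (L * (s - a))" by (rule mult.commute)
  ultimately show ?thesis using ineq[OF s] unfolding I_def by linarith
qed


locale odesys =
  fixes F :: "'a::euclidean_space \<Rightarrow> 'b::euclidean_space \<Rightarrow> 'a" and U :: "'b set" and C :: real
  assumes Fcont: "continuous_on (UNIV \<times> U) (\<lambda>(x, u). F x u)"
    and Cpos: "C > 0"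
    and Fgrowth: "\<And>u x. u \<in> U \<Longrightarrow> norm (F x u) \<le> C * (1 + norm x)"
    and Flip: "\<And>u x y. u \<in> U \<Longrightarrow> norm (F x u - F y u) \<le> C * norm (x - y)"
begin

definition adm :: "(real \<Rightarrow> 'b) \<Rightarrow> real \<Rightarrow> real \<Rightarrow> bool" where
  "adm w a b \<longleftrightarrow> w \<in> borel_measurable (lebesgue_on {a..b}) \<and> (\<forall>s\<in>{a..b}. w s \<in> U)"

lemma adm_mono: "adm w a b \<Longrightarrow> a \<le> c \<Longrightarrow> d \<le> b \<Longrightarrow> adm w c d"
  unfolding adm_def by (auto intro: measurable_restrict_mono)

lemma Fh_meas:
  assumes w: "adm w a b" and g: "continuous_on {a..b} \<gamma>"
  shows "(\<lambda>r. F (\<gamma> r) (w r)) \<in> borel_measurable (lebesgue_on {a..b})"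
proof -
  have gm: "\<gamma> \<in> borel_measurable (lebesgue_on {a..b})"
    by (rule continuous_imp_measurable_on_sets_lebesgue[OF g]) auto
  have wm: "w \<in> borel_measurable (lebesgue_on {a..b})" using w unfolding adm_def by auto
  have pm: "(\<lambda>r. (\<gamma> r, w r)) \<in> borel_measurable (lebesgue_on {a..b})"
    using gm wm by (rule borel_measurable_Pair)
  have pm2: "(\<lambda>r. (\<gamma> r, w r)) \<in> measurable (lebesgue_on {a..b}) (restrict_space borel (UNIV \<times> U))"
    by (rule measurable_restrict_space2) (use w pm in \<open>auto simp: adm_def\<close>)
  have Fm: "(\<lambda>(x, u). F x u) \<in> borel_measurable (restrict_space borel (UNIV \<times> U))"
    by (rule borel_measurable_continuous_on_restrict[OF Fcont])
  have "(\<lambda>(x, u). F x u) \<circ> (\<lambda>r. (\<gamma> r, w r)) \<in> borel_measurable (lebesgue_on {a..b})"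
    by (rule measurable_comp[OF pm2 Fm])
  then show ?thesis by (simp add: o_def)
qed

lemma Fh_int:
  assumes w: "adm w a b" and g: "continuous_on {a..b} \<gamma>"
  shows "(\<lambda>r. F (\<gamma> r) (w r)) integrable_on {a..b}"
proof (rule measurable_bounded_by_integrable_imp_integrable[OF Fh_meas[OF w g]])
  show "(\<lambda>r. C * (1 + norm (\<gamma> r))) integrable_on {a..b}"
    by (intro integrable_continuous_interval continuous_intros g)
  show "norm (F (\<gamma> r) (w r)) \<le> C * (1 + norm (\<gamma> r))" if "r \<in> {a..b}" for r
    using w that by (intro Fgrowth) (auto simp: adm_def)
qed auto

lemma traj_cont: "traj F w a b x \<gamma> \<Longrightarrow> continuous_on {a..b} \<gamma>"
  unfolding traj_def by auto

lemma traj_eq: "traj F w a b x \<gamma> \<Longrightarrow> s \<in> {a..b} \<Longrightarrow> \<gamma> s = x + integral {a..s} (\<lambda>r. F (\<gamma> r) (w r))"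
  unfolding traj_def by auto

lemma traj_restrict: "traj F w a b x \<gamma> \<Longrightarrow> a \<le> s \<Longrightarrow> s \<le> b \<Longrightarrow> traj F w a s x \<gamma>"
  unfolding traj_def by (auto intro: continuous_on_subset)

lemma traj_bound:
  assumes w: "adm w a b" and tr: "traj F w a b x \<gamma>" and s: "s \<in> {a..b}"
  shows "1 + norm (\<gamma> s) \<le> (1 + norm x) * exp (C * (s - a))"
proof (rule gronwall[where d = "\<lambda>r. 1 + norm (\<gamma> r)", OF _ _ _ s])
  have gc: "continuous_on {a..b} \<gamma>" using tr by (rule traj_cont)
  show "continuous_on {a..b} (\<lambda>r. 1 + norm (\<gamma> r))" by (intro continuous_intros gc)
  show "0 \<le> C" using Cpos by simp
  fix s assume s: "s \<in> {a..b}"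
  have gcs: "continuous_on {a..s} \<gamma>" using gc s by (auto intro: continuous_on_subset)
  have ws: "adm w a s" using w s by (auto intro: adm_mono)
  have "norm (integral {a..s} (\<lambda>r. F (\<gamma> r) (w r))) \<le> integral {a..s} (\<lambda>r. C * (1 + norm (\<gamma> r)))"
  proof (rule integral_norm_bound_integral)
    show "(\<lambda>r. F (\<gamma> r) (w r)) integrable_on {a..s}" by (rule Fh_int[OF ws gcs])
    show "(\<lambda>r. C * (1 + norm (\<gamma> r))) integrable_on {a..s}"
      by (intro integrable_continuous_interval continuous_intros gcs)
    show "norm (F (\<gamma> r) (w r)) \<le> C * (1 + norm (\<gamma> r))" if "r \<in> {a..s}" for r
      using ws that by (intro Fgrowth) (auto simp: adm_def)
  qed
  also have "\<dots> = C * integral {a..s} (\<lambda>r. 1 + norm (\<gamma> r))"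
    by simp
  finally have "norm (integral {a..s} (\<lambda>r. F (\<gamma> r) (w r))) \<le> C * integral {a..s} (\<lambda>r. 1 + norm (\<gamma> r))" .
  moreover have "norm (\<gamma> s) \<le> norm x + norm (integral {a..s} (\<lambda>r. F (\<gamma> r) (w r)))"
    using traj_eq[OF tr s] by (simp add: norm_triangle_ineq)
  ultimately show "1 + norm (\<gamma> s) \<le> (1 + norm x) + C * integral {a..s} (\<lambda>r. 1 + norm (\<gamma> r))"
    by linarith
qed

lemma traj_lip:
  assumes w: "adm w a b" and tr1: "traj F w a b x \<gamma>" and tr2: "traj F w a b y \<eta>" and s: "s \<in> {a..b}"
  shows "norm (\<gamma> s - \<eta> s) \<le> norm (x - y) * exp (C * (s - a))"
proof (rule gronwall[where d = "\<lambda>r. norm (\<gamma> r - \<eta> r)", OF _ _ _ s])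
  have gc: "continuous_on {a..b} \<gamma>" using tr1 by (rule traj_cont)
  have ec: "continuous_on {a..b} \<eta>" using tr2 by (rule traj_cont)
  show "continuous_on {a..b} (\<lambda>r. norm (\<gamma> r - \<eta> r))" by (intro continuous_intros gc ec)
  show "0 \<le> C" using Cpos by simp
  fix s assume s: "s \<in> {a..b}"
  have gcs: "continuous_on {a..s} \<gamma>" using gc s by (auto intro: continuous_on_subset)
  have ecs: "continuous_on {a..s} \<eta>" using ec s by (auto intro: continuous_on_subset)
  have ws: "adm w a s" using w s by (auto intro: adm_mono)
  have i1: "(\<lambda>r. F (\<gamma> r) (w r)) integrable_on {a..s}" by (rule Fh_int[OF ws gcs])
  have i2: "(\<lambda>r. F (\<eta> r) (w r)) integrable_on {a..s}" by (rule Fh_int[OF ws ecs])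
  have "norm (integral {a..s} (\<lambda>r. F (\<gamma> r) (w r) - F (\<eta> r) (w r))) \<le> integral {a..s} (\<lambda>r. C * norm (\<gamma> r - \<eta> r))"
  proof (rule integral_norm_bound_integral)
    show "(\<lambda>r. F (\<gamma> r) (w r) - F (\<eta> r) (w r)) integrable_on {a..s}" by (intro integrable_diff i1 i2)
    show "(\<lambda>r. C * norm (\<gamma> r - \<eta> r)) integrable_on {a..s}"
      by (intro integrable_continuous_interval continuous_intros gcs ecs)
    show "norm (F (\<gamma> r) (w r) - F (\<eta> r) (w r)) \<le> C * norm (\<gamma> r - \<eta> r)" if "r \<in> {a..s}" for r
      using ws that by (intro Flip) (auto simp: adm_def)
  qed
  also have "\<dots> = C * integral {a..s} (\<lambda>r. norm (\<gamma> r - \<eta> r))"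
    by simp
  finally have A: "norm (integral {a..s} (\<lambda>r. F (\<gamma> r) (w r)) - integral {a..s} (\<lambda>r. F (\<eta> r) (w r)))
     \<le> C * integral {a..s} (\<lambda>r. norm (\<gamma> r - \<eta> r))"
    by (simp add: integral_diff[OF i1 i2])
  have "\<gamma> s - \<eta> s = (x - y) + (integral {a..s} (\<lambda>r. F (\<gamma> r) (w r)) - integral {a..s} (\<lambda>r. F (\<eta> r) (w r)))"
    using traj_eq[OF tr1 s] traj_eq[OF tr2 s] by (simp add: algebra_simps)
  then have "norm (\<gamma> s - \<eta> s) \<le> norm (x - y) + norm (integral {a..s} (\<lambda>r. F (\<gamma> r) (w r)) - integral {a..s} (\<lambda>r. F (\<eta> r) (w r)))"
    by (metis norm_triangle_ineq)
  with A show "norm (\<gamma> s - \<eta> s) \<le> norm (x - y) + C * integral {a..s} (\<lambda>r. norm (\<gamma> r - \<eta> r))"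
    by linarith
qed

lemma traj_unique:
  assumes w: "adm w a b" and tr1: "traj F w a b x \<gamma>" and tr2: "traj F w a b x \<eta>" and s: "s \<in> {a..b}"
  shows "\<gamma> s = \<eta> s"
  using traj_lip[OF w tr1 tr2 s] by simp

lemma traj_time:
  assumes w: "adm w a b" and tr: "traj F w a b x \<gamma>" and s: "s \<in> {a..b}" and s': "s' \<in> {a..b}" and le: "s' \<le> s"
  shows "norm (\<gamma> s - \<gamma> s') \<le> C * (1 + norm x) * exp (C * (b - a)) * (s - s')"
proof -
  have gc: "continuous_on {a..b} \<gamma>" using tr by (rule traj_cont)
  have gcs: "continuous_on {a..s} \<gamma>" using gc s by (auto intro: continuous_on_subset)
  have ws: "adm w a s" using w s by (auto intro: adm_mono)
  have i1: "(\<lambda>r. F (\<gamma> r) (w r)) integrable_on {a..s}" by (rule Fh_int[OF ws gcs])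
  have "integral {a..s'} (\<lambda>r. F (\<gamma> r) (w r)) + integral {s'..s} (\<lambda>r. F (\<gamma> r) (w r)) = integral {a..s} (\<lambda>r. F (\<gamma> r) (w r))"
    using Henstock_Kurzweil_Integration.integral_combine[of a s' s "\<lambda>r. F (\<gamma> r) (w r)"] s' le i1 by auto
  then have eq: "\<gamma> s - \<gamma> s' = integral {s'..s} (\<lambda>r. F (\<gamma> r) (w r))"
    using traj_eq[OF tr s] traj_eq[OF tr s'] by (simp add: algebra_simps)
  define K where "K = C * (1 + norm x) * exp (C * (b - a))"
  have "norm (integral {s'..s} (\<lambda>r. F (\<gamma> r) (w r))) \<le> integral {s'..s} (\<lambda>r. K)"
  proof (rule integral_norm_bound_integral)
    show "(\<lambda>r. F (\<gamma> r) (w r)) integrable_on {s'..s}"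
      by (rule integrable_on_subinterval[OF i1]) (use s' in auto)
    show "(\<lambda>r. K) integrable_on {s'..s}" by (rule integrable_const_ivl)
    fix r assume r: "r \<in> {s'..s}"
    then have ra: "r \<in> {a..b}" using s s' by auto
    have "norm (F (\<gamma> r) (w r)) \<le> C * (1 + norm (\<gamma> r))"
      using w ra by (intro Fgrowth) (auto simp: adm_def)
    also have "\<dots> \<le> C * ((1 + norm x) * exp (C * (r - a)))"
      using traj_bound[OF w tr ra] Cpos by (intro mult_left_mono) auto
    also have "\<dots> \<le> C * ((1 + norm x) * exp (C * (b - a)))"
      using ra Cpos by (intro mult_left_mono) (auto intro!: mult_left_mono)
    finally show "norm (F (\<gamma> r) (w r)) \<le> K" unfolding K_def by (simp add: mult.assoc)
  qed
  also have "\<dots> = K * (s - s')" using le by simp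
  finally show ?thesis using eq unfolding K_def by simp
qed

lemma flow_eq:
  assumes w: "adm w a b" and tr: "traj F w a b x \<gamma>" and s: "s \<in> {a..b}"
  shows "flow F w a s x = \<gamma> s"
  unfolding flow_def
proof (rule the_equality)
  show "\<exists>\<gamma>'. traj F w a s x \<gamma>' \<and> \<gamma>' s = \<gamma> s"
    using traj_restrict[OF tr] s by auto
  fix y assume "\<exists>\<gamma>'. traj F w a s x \<gamma>' \<and> \<gamma>' s = y"
  then obtain \<gamma>' where tr': "traj F w a s x \<gamma>'" and y: "\<gamma>' s = y" by auto
  have ws: "adm w a s" using w s by (auto intro: adm_mono)
  show "y = \<gamma> s"
    using traj_unique[OF ws tr' traj_restrict[OF tr] ] s y by auto
qed


lemma int_split_bound:
  assumes w: "adm w a b" and g: "continuous_on {a..b} g"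
    and bd: "\<And>r. r \<in> {a..b} \<Longrightarrow> norm (F (g r) (w r)) \<le> \<Lambda>"
    and s: "s \<in> {a..b}" and s': "s' \<in> {a..b}" and le: "s' \<le> s"
  shows "norm (integral {a..s} (\<lambda>r. F (g r) (w r)) - integral {a..s'} (\<lambda>r. F (g r) (w r))) \<le> \<Lambda> * (s - s')"
proof -
  have gcs: "continuous_on {a..s} g" using g s by (auto intro: continuous_on_subset)
  have ws: "adm w a s" using w s by (auto intro: adm_mono)
  have i1: "(\<lambda>r. F (g r) (w r)) integrable_on {a..s}" by (rule Fh_int[OF ws gcs])
  have "integral {a..s'} (\<lambda>r. F (g r) (w r)) + integral {s'..s} (\<lambda>r. F (g r) (w r)) = integral {a..s} (\<lambda>r. F (g r) (w r))"
    using Henstock_Kurzweil_Integration.integral_combine[of a s' s "\<lambda>r. F (g r) (w r)"] s' le i1 by auto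
  then have eq: "integral {a..s} (\<lambda>r. F (g r) (w r)) - integral {a..s'} (\<lambda>r. F (g r) (w r)) = integral {s'..s} (\<lambda>r. F (g r) (w r))"
    by (simp add: algebra_simps)
  have "norm (integral {s'..s} (\<lambda>r. F (g r) (w r))) \<le> integral {s'..s} (\<lambda>r. \<Lambda>)"
  proof (rule integral_norm_bound_integral)
    show "(\<lambda>r. F (g r) (w r)) integrable_on {s'..s}"
      by (rule integrable_on_subinterval[OF i1]) (use s' in auto)
    show "(\<lambda>r. \<Lambda>) integrable_on {s'..s}" by (rule integrable_const_ivl)
    fix r assume r: "r \<in> {s'..s}"
    then show "norm (F (g r) (w r)) \<le> \<Lambda>" using s s' by (intro bd) auto
  qed
  also have "\<dots> = \<Lambda> * (s - s')" using le by simp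
  finally show ?thesis using eq by simp
qed

primrec picard :: "(real \<Rightarrow> 'b) \<Rightarrow> real \<Rightarrow> 'a \<Rightarrow> nat \<Rightarrow> real \<Rightarrow> 'a" where
  "picard w a x 0 = (\<lambda>s. x)"
| "picard w a x (Suc n) = (\<lambda>s. x + integral {a..s} (\<lambda>r. F (picard w a x n r) (w r)))"

lemma exp_integral:
  fixes a s L :: real
  assumes "a \<le> s" "L > 0"
  shows "((\<lambda>r. exp (L * (r - a))) has_integral (exp (L * (s - a)) / L - 1 / L)) {a..s}"
proof -
  have "((\<lambda>r. exp (L * (r - a))) has_integral (exp (L * (s - a)) / L - exp (L * (a - a)) / L)) {a..s}"
  proof (rule fundamental_theorem_of_calculus[OF assms(1)])
    fix r assume "r \<in> {a..s}"
    have "((\<lambda>r. exp (L * (r - a)) / L) has_real_derivative (exp (L * (r - a)) * (L * (1 - 0)) / L)) (at r within {a..s})"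
      using assms(2) by (intro derivative_eq_intros) auto
    then show "((\<lambda>r. exp (L * (r - a)) / L) has_vector_derivative exp (L * (r - a))) (at r within {a..s})"
      using assms by (simp add: has_real_derivative_iff_has_vector_derivative)
  qed
  then show ?thesis by simp
qed

lemma traj_exists:
  assumes w: "adm w a b" and ab: "a \<le> b"
  shows "\<exists>\<gamma>. traj F w a b x \<gamma>"
proof -
  let ?p = "picard w a x"
  have wU: "\<And>r. r \<in> {a..b} \<Longrightarrow> w r \<in> U" using w by (auto simp: adm_def)
  have pc: "continuous_on {a..b} (?p n)" for n
  proof (induction n)
    case 0 then show ?case by (simp add: continuous_on_const)
  next
    case (Suc n)
    have "(\<lambda>r. F (?p n r) (w r)) integrable_on {a..b}" by (rule Fh_int[OF w Suc])
    then have "continuous_on {a..b} (\<lambda>s. integral {a..s} (\<lambda>r. F (?p n r) (w r)))"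
      by (rule indefinite_integral_continuous_1)
    then show ?case by (simp add: continuous_on_add continuous_on_const)
  qed
  have pcs: "continuous_on {a..s} (?p n)" if "s \<in> {a..b}" for n s
    using that by (intro continuous_on_subset[OF pc]) auto
  have intp: "(\<lambda>r. F (?p n r) (w r)) integrable_on {a..s}" if "s \<in> {a..b}" for n s
    using that by (intro Fh_int[OF _ pcs]) (auto intro: adm_mono[OF w])
  define K where "K = C * (1 + norm x) * (b - a)"
  have K0: "K \<ge> 0" unfolding K_def using Cpos ab by auto
  have Dbound: "\<forall>s\<in>{a..b}. norm (?p (Suc n) s - ?p n s) \<le> K * exp (2 * C * (s - a)) * (1/2) ^ n" for n
  proof (induction n)
    case 0
    show ?case
    proof
      fix s assume s: "s \<in> {a..b}"
      have "norm (?p 1 s - ?p 0 s) = norm (integral {a..s} (\<lambda>r. F x (w r)) - integral {a..a} (\<lambda>r. F x (w r)))"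
        by simp
      also have "\<dots> \<le> (C * (1 + norm x)) * (s - a)"
        using s ab by (intro int_split_bound[OF w, where g = "\<lambda>r. x"]) (auto intro!: Fgrowth wU continuous_on_const)
      also have "\<dots> \<le> K" unfolding K_def using s Cpos by (intro mult_left_mono) auto
      also have "\<dots> \<le> K * exp (2 * C * (s - a)) * (1/2) ^ 0"
        using K0 s Cpos by (simp add: mult_le_cancel_left1)
      finally show "norm (?p (Suc 0) s - ?p 0 s) \<le> K * exp (2 * C * (s - a)) * (1/2) ^ 0" by simp
    qed
  next
    case (Suc n)
    show ?case
    proof
      fix s assume s: "s \<in> {a..b}"
      have i1: "(\<lambda>r. F (?p (Suc n) r) (w r)) integrable_on {a..s}" by (rule intp[OF s])
      have i2: "(\<lambda>r. F (?p n r) (w r)) integrable_on {a..s}" by (rule intp[OF s])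
      have hi: "((\<lambda>r. (C * K * (1/2)^n) * exp (2 * C * (r - a))) has_integral
           ((C * K * (1/2)^n) * (exp (2 * C * (s - a)) / (2 * C) - 1 / (2 * C)))) {a..s}"
        by (intro has_integral_mult_right exp_integral) (use s Cpos in auto)
      have "norm (?p (Suc (Suc n)) s - ?p (Suc n) s)
          = norm (integral {a..s} (\<lambda>r. F (?p (Suc n) r) (w r) - F (?p n r) (w r)))"
      proof -
        have e1: "?p (Suc (Suc n)) s = x + integral {a..s} (\<lambda>r. F (?p (Suc n) r) (w r))"
          by (simp only: picard.simps(2)[of w a x "Suc n"])
        have e2: "?p (Suc n) s = x + integral {a..s} (\<lambda>r. F (?p n r) (w r))"
          by (simp only: picard.simps(2)[of w a x n])
        show ?thesis unfolding e1 e2 integral_diff[OF i1 i2] by simp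
      qed
      also have "\<dots> \<le> integral {a..s} (\<lambda>r. (C * K * (1/2)^n) * exp (2 * C * (r - a)))"
      proof (rule integral_norm_bound_integral)
        show "(\<lambda>r. F (?p (Suc n) r) (w r) - F (?p n r) (w r)) integrable_on {a..s}"
          by (intro integrable_diff i1 i2)
        show "(\<lambda>r. (C * K * (1/2)^n) * exp (2 * C * (r - a))) integrable_on {a..s}"
          using hi by blast
        fix r assume r: "r \<in> {a..s}"
        then have rab: "r \<in> {a..b}" using s by auto
        have "norm (F (?p (Suc n) r) (w r) - F (?p n r) (w r)) \<le> C * norm (?p (Suc n) r - ?p n r)"
          by (rule Flip[OF wU[OF rab]])
        also have "\<dots> \<le> C * (K * exp (2 * C * (r - a)) * (1/2) ^ n)"
          using Suc.IH rab Cpos by (intro mult_left_mono) auto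
        finally show "norm (F (?p (Suc n) r) (w r) - F (?p n r) (w r)) \<le> (C * K * (1/2)^n) * exp (2 * C * (r - a))"
          by (simp add: algebra_simps)
      qed
      also have "\<dots> = (C * K * (1/2)^n) * (exp (2 * C * (s - a)) / (2 * C) - 1 / (2 * C))"
        using hi by (rule integral_unique)
      also have "\<dots> = K * (1/2)^n * (exp (2 * C * (s - a)) - 1) / 2"
        using Cpos by (simp add: field_simps)
      also have "\<dots> \<le> K * (1/2)^n * exp (2 * C * (s - a)) / 2"
        using K0 by (intro divide_right_mono mult_left_mono) auto
      also have "\<dots> = K * exp (2 * C * (s - a)) * (1/2) ^ Suc n" by simp
      finally show "norm (?p (Suc (Suc n)) s - ?p (Suc n) s) \<le> K * exp (2 * C * (s - a)) * (1/2) ^ Suc n" .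
    qed
  qed
  define M where "M = K * exp (2 * C * (b - a))"
  have M0: "M \<ge> 0" unfolding M_def using K0 by simp
  have D: "norm (?p (Suc n) s - ?p n s) \<le> M * (1/2) ^ n" if s: "s \<in> {a..b}" for n s
  proof -
    have "norm (?p (Suc n) s - ?p n s) \<le> K * exp (2 * C * (s - a)) * (1/2) ^ n"
      using Dbound s by auto
    also have "\<dots> \<le> M * (1/2) ^ n" unfolding M_def
      using s Cpos K0 by (intro mult_right_mono mult_left_mono) auto
    finally show ?thesis .
  qed
  have tail: "norm (?p m s - ?p n s) \<le> 2 * M * (1/2) ^ n - 2 * M * (1/2) ^ m"
    if s: "s \<in> {a..b}" and nm: "n \<le> m" for n m s
    using nm
  proof (induction m rule: dec_induct)
    case base then show ?case by simp
  next
    case (step m)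
    have "norm (?p (Suc m) s - ?p n s) \<le> norm (?p (Suc m) s - ?p m s) + norm (?p m s - ?p n s)"
      by (rule norm_diff_triangle_le[OF order_refl order_refl])
    also have "\<dots> \<le> M * (1/2) ^ m + (2 * M * (1/2) ^ n - 2 * M * (1/2) ^ m)"
      using D[OF s, of m] step.IH by linarith
    also have "\<dots> = 2 * M * (1/2) ^ n - 2 * M * (1/2) ^ Suc m"
      unfolding power_Suc by (simp add: algebra_simps)
    finally show ?case .
  qed
  have tail2: "norm (?p m s - ?p n s) \<le> 2 * M * (1/2) ^ n" if s: "s \<in> {a..b}" and nm: "n \<le> m" for n m s
  proof -
    have "0 \<le> 2 * M * (1/2::real) ^ m" using M0 by simp
    then show ?thesis using tail[OF s nm] by linarith
  qed
  have cauchy: "Cauchy (\<lambda>n. ?p n s)" if s: "s \<in> {a..b}" for s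
  proof (rule metric_CauchyI)
    fix e :: real assume e: "e > 0"
    obtain N where N: "(1/2::real) ^ N < e / (4 * M + 1)"
      using real_arch_pow_inv[of "e / (4 * M + 1)" "1/2"] e M0 by auto
    have "4 * M * (1/2) ^ N \<le> (4 * M + 1) * (1/2::real) ^ N" by simp
    also have "\<dots> < e" using N M0 by (simp add: field_simps)
    finally have NE: "4 * M * (1/2) ^ N < e" .
    show "\<exists>N. \<forall>m\<ge>N. \<forall>n\<ge>N. dist (?p m s) (?p n s) < e"
    proof (intro exI allI impI)
      fix m n assume mN: "m \<ge> N" and nN: "n \<ge> N"
      have "dist (?p m s) (?p n s) \<le> norm (?p m s - ?p N s) + norm (?p n s - ?p N s)"
        by (simp add: dist_norm norm_diff_triangle_le[of _ "?p N s"] norm_minus_commute)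
      also have "\<dots> \<le> 2 * M * (1/2) ^ N + 2 * M * (1/2) ^ N"
        using tail2[OF s mN] tail2[OF s nN] by linarith
      finally show "dist (?p m s) (?p n s) < e" using NE by linarith
    qed
  qed
  define \<gamma> where "\<gamma> s = lim (\<lambda>n. ?p n s)" for s
  have lim: "(\<lambda>n. ?p n s) \<longlonglongrightarrow> \<gamma> s" if "s \<in> {a..b}" for s
    unfolding \<gamma>_def using cauchy[OF that] by (simp add: Cauchy_convergent_iff convergent_LIMSEQ_iff)
  have gtail: "norm (\<gamma> s - ?p n s) \<le> 2 * M * (1/2) ^ n" if s: "s \<in> {a..b}" for n s
  proof (rule LIMSEQ_le_const2)
    show "(\<lambda>m. norm (?p m s - ?p n s)) \<longlonglongrightarrow> norm (\<gamma> s - ?p n s)"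
      by (intro tendsto_intros lim[OF s])
    show "\<exists>N. \<forall>m\<ge>N. norm (?p m s - ?p n s) \<le> 2 * M * (1/2) ^ n"
      using tail2[OF s] by auto
  qed
  define \<Lambda> where "\<Lambda> = C * (1 + norm x + 2 * M)"
  have pbound: "norm (F (?p n r) (w r)) \<le> \<Lambda>" if r: "r \<in> {a..b}" for n r
  proof -
    have "norm (?p n r - ?p 0 r) \<le> 2 * M" using tail2[OF r, of 0 n] by simp
    then have "norm (?p n r) \<le> norm x + 2 * M" using norm_triangle_ineq2[of "?p n r" x] by simp
    then have "C * (1 + norm (?p n r)) \<le> \<Lambda>" unfolding \<Lambda>_def using Cpos by (intro mult_left_mono) auto
    with Fgrowth[OF wU[OF r]] show ?thesis by (rule order_trans)
  qed
  have L0: "\<Lambda> \<ge> 0" unfolding \<Lambda>_def using Cpos M0 by auto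
  have plip: "norm (?p n s - ?p n s') \<le> \<Lambda> * (s - s')" if s: "s \<in> {a..b}" and s': "s' \<in> {a..b}" and le: "s' \<le> s" for n s s'
  proof (cases n)
    case 0 then show ?thesis using L0 le by simp
  next
    case (Suc k)
    have "norm (?p (Suc k) s - ?p (Suc k) s') = norm (integral {a..s} (\<lambda>r. F (?p k r) (w r)) - integral {a..s'} (\<lambda>r. F (?p k r) (w r)))"
      by simp
    also have "\<dots> \<le> \<Lambda> * (s - s')"
      by (rule int_split_bound[OF w pc pbound s s' le])
    finally show ?thesis using Suc by simp
  qed
  have glip: "dist (\<gamma> s) (\<gamma> s') \<le> \<Lambda> * dist s s'" if s: "s \<in> {a..b}" and s': "s' \<in> {a..b}" for s s'
  proof (cases "s' \<le> s")
    case True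
    have "norm (\<gamma> s - \<gamma> s') \<le> \<Lambda> * (s - s')"
    proof (rule LIMSEQ_le_const2)
      show "(\<lambda>n. norm (?p n s - ?p n s')) \<longlonglongrightarrow> norm (\<gamma> s - \<gamma> s')"
        by (intro tendsto_intros lim s s')
      show "\<exists>N. \<forall>n\<ge>N. norm (?p n s - ?p n s') \<le> \<Lambda> * (s - s')" using plip[OF s s' True] by auto
    qed
    then show ?thesis using True by (simp add: dist_norm dist_real_def)
  next
    case False
    have "norm (\<gamma> s' - \<gamma> s) \<le> \<Lambda> * (s' - s)"
    proof (rule LIMSEQ_le_const2)
      show "(\<lambda>n. norm (?p n s' - ?p n s)) \<longlonglongrightarrow> norm (\<gamma> s' - \<gamma> s)"
        by (intro tendsto_intros lim s s')
      show "\<exists>N. \<forall>n\<ge>N. norm (?p n s' - ?p n s) \<le> \<Lambda> * (s' - s)" using plip[OF s' s] False by auto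
    qed
    then show ?thesis using False by (simp add: dist_norm dist_real_def norm_minus_commute)
  qed
  have gc: "continuous_on {a..b} \<gamma>"
    by (rule lipschitz_on_continuous_on[OF lipschitz_onI[OF glip L0]])
  show ?thesis
  proof (intro exI, unfold traj_def, intro conjI ballI)
    show "continuous_on {a..b} \<gamma>" by (rule gc)
    fix s assume s: "s \<in> {a..b}"
    have gcs: "continuous_on {a..s} \<gamma>" using gc s by (auto intro: continuous_on_subset)
    have ws: "adm w a s" using w s by (auto intro: adm_mono)
    have ig: "(\<lambda>r. F (\<gamma> r) (w r)) integrable_on {a..s}" by (rule Fh_int[OF ws gcs])
    then show "(\<lambda>r. F (\<gamma> r) (w r)) integrable_on {a..s}" .
    have conv: "(\<lambda>n. ?p (Suc n) s - (x + integral {a..s} (\<lambda>r. F (\<gamma> r) (w r)))) \<longlonglongrightarrow> 0"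
    proof (rule Lim_null_comparison)
      show "\<forall>\<^sub>F n in sequentially. norm (?p (Suc n) s - (x + integral {a..s} (\<lambda>r. F (\<gamma> r) (w r))))
          \<le> (C * 2 * M * (s - a)) * (1/2) ^ n"
      proof (intro always_eventually allI)
        fix n
        have "norm (?p (Suc n) s - (x + integral {a..s} (\<lambda>r. F (\<gamma> r) (w r))))
            = norm (integral {a..s} (\<lambda>r. F (?p n r) (w r) - F (\<gamma> r) (w r)))"
          by (simp add: integral_diff[OF intp[OF s] ig])
        also have "\<dots> \<le> integral {a..s} (\<lambda>r. C * (2 * M * (1/2) ^ n))"
        proof (rule integral_norm_bound_integral)
          show "(\<lambda>r. F (?p n r) (w r) - F (\<gamma> r) (w r)) integrable_on {a..s}"
            by (intro integrable_diff intp[OF s] ig)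
          show "(\<lambda>r. C * (2 * M * (1/2) ^ n)) integrable_on {a..s}" by (rule integrable_const_ivl)
          fix r assume r: "r \<in> {a..s}"
          then have rab: "r \<in> {a..b}" using s by auto
          have "norm (F (?p n r) (w r) - F (\<gamma> r) (w r)) \<le> C * norm (?p n r - \<gamma> r)"
            by (rule Flip[OF wU[OF rab]])
          also have "\<dots> \<le> C * (2 * M * (1/2) ^ n)"
            using gtail[OF rab, of n] Cpos by (intro mult_left_mono) (auto simp: norm_minus_commute)
          finally show "norm (F (?p n r) (w r) - F (\<gamma> r) (w r)) \<le> C * (2 * M * (1/2) ^ n)" .
        qed
        also have "\<dots> = (C * 2 * M * (s - a)) * (1/2) ^ n" using s by simp
        finally show "norm (?p (Suc n) s - (x + integral {a..s} (\<lambda>r. F (\<gamma> r) (w r))))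
          \<le> (C * 2 * M * (s - a)) * (1/2) ^ n" .
      qed
      show "(\<lambda>n. (C * 2 * M * (s - a)) * (1/2::real) ^ n) \<longlonglongrightarrow> 0"
        by (intro tendsto_mult_right_zero LIMSEQ_realpow_zero) auto
    qed
    have "(\<lambda>n. ?p (Suc n) s) \<longlonglongrightarrow> x + integral {a..s} (\<lambda>r. F (\<gamma> r) (w r))"
      using conv by (rule LIM_zero_cancel)
    moreover have "(\<lambda>n. ?p (Suc n) s) \<longlonglongrightarrow> \<gamma> s" using lim[OF s] by (rule LIMSEQ_Suc)
    ultimately show "\<gamma> s = x + integral {a..s} (\<lambda>r. F (\<gamma> r) (w r))"
      by (rule LIMSEQ_unique[symmetric])
  qed
qed


lemma flow_traj:
  assumes w: "adm w a b" and s: "s \<in> {a..b}"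
  obtains \<gamma> where "traj F w a b x \<gamma>" "\<And>s. s \<in> {a..b} \<Longrightarrow> flow F w a s x = \<gamma> s"
proof -
  have ab: "a \<le> b" using s by auto
  obtain \<gamma> where tr: "traj F w a b x \<gamma>" using traj_exists[OF w ab] by blast
  show ?thesis by (rule that[OF tr flow_eq[OF w tr]])
qed

lemma flow_start:
  assumes w: "adm w a b" and ab: "a \<le> b"
  shows "flow F w a a x = x"
proof -
  obtain \<gamma> where tr: "traj F w a b x \<gamma>" and fl: "\<And>s. s \<in> {a..b} \<Longrightarrow> flow F w a s x = \<gamma> s"
    using flow_traj[OF w, of a] ab by auto
  have "\<gamma> a = x" using traj_eq[OF tr, of a] ab by simp
  then show ?thesis using fl[of a] ab by simp
qed

lemma flow_lip:
  assumes w: "adm w a b" and s: "s \<in> {a..b}"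
  shows "dist (flow F w a s x) (flow F w a s y) \<le> exp (C * (s - a)) * dist x y"
proof -
  obtain \<gamma> where tr: "traj F w a b x \<gamma>" and fl: "\<And>s. s \<in> {a..b} \<Longrightarrow> flow F w a s x = \<gamma> s"
    using flow_traj[OF w s] by auto
  obtain \<eta> where tr2: "traj F w a b y \<eta>" and fl2: "\<And>s. s \<in> {a..b} \<Longrightarrow> flow F w a s y = \<eta> s"
    using flow_traj[OF w s] by auto
  show ?thesis using traj_lip[OF w tr tr2 s] fl[OF s] fl2[OF s] by (simp add: dist_norm mult.commute)
qed

lemma flow_bound:
  assumes w: "adm w a b" and s: "s \<in> {a..b}"
  shows "1 + norm (flow F w a s x) \<le> (1 + norm x) * exp (C * (s - a))"
proof -
  obtain \<gamma> where tr: "traj F w a b x \<gamma>" and fl: "\<And>s. s \<in> {a..b} \<Longrightarrow> flow F w a s x = \<gamma> s"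
    using flow_traj[OF w s] by auto
  show ?thesis using traj_bound[OF w tr s] fl[OF s] by simp
qed

lemma flow_time:
  assumes w: "adm w a b" and s: "s \<in> {a..b}" and s': "s' \<in> {a..b}"
  shows "dist (flow F w a s x) (flow F w a s' x) \<le> C * (1 + norm x) * exp (C * (b - a)) * \<bar>s - s'\<bar>"
proof -
  obtain \<gamma> where tr: "traj F w a b x \<gamma>" and fl: "\<And>s. s \<in> {a..b} \<Longrightarrow> flow F w a s x = \<gamma> s"
    using flow_traj[OF w s] by auto
  show ?thesis
  proof (cases "s' \<le> s")
    case True
    then show ?thesis using traj_time[OF w tr s s' True] fl[OF s] fl[OF s'] by (simp add: dist_norm)
  next
    case False
    then show ?thesis using traj_time[OF w tr s' s] fl[OF s] fl[OF s'] by (simp add: dist_norm norm_minus_commute)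
  qed
qed

end



lemma equi_pointwise_subseq:
  fixes g :: "nat \<Rightarrow> 'c::{metric_space, second_countable_topology} \<Rightarrow> 'a::euclidean_space"
  assumes bd: "\<And>j z. norm (g j z) \<le> B z"
    and eq: "\<And>j z z'. dist (g j z') (g j z) \<le> Q z * dist z' z"
    and Q: "\<And>z. Q z \<ge> 0"
  shows "\<exists>\<rho>. strict_mono \<rho> \<and> (\<forall>z. convergent (\<lambda>j. g (\<rho> j) z))"
proof -
  obtain D :: "'c set" where D: "countable D" and dense: "\<And>X. open X \<Longrightarrow> X \<noteq> {} \<Longrightarrow> \<exists>d\<in>D. d \<in> X"
    using countable_dense_exists by blast
  have Dne: "D \<noteq> {}" using dense[of UNIV] by auto
  define d where "d = from_nat_into D"
  have rd: "range d = D" unfolding d_def using D Dne by simp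
  have densed: "\<exists>n. dist (d n) z < e" if "e > 0" for z e
  proof -
    have "ball z e \<noteq> {}" using that by auto
    then obtain y where "y \<in> D" "y \<in> ball z e" using dense[OF open_ball] by blast
    then show ?thesis using rd by (auto simp: dist_commute)
  qed
  let ?P = "\<lambda>n s. convergent (\<lambda>k. g (s k) (d n))"
  interpret nat: subseqs ?P
  proof (unfold convergent_def, unfold subseqs_def, auto)
    fix n :: nat and s :: "nat \<Rightarrow> nat" assume s: "strict_mono s"
    have "bounded (range (\<lambda>k. g (s k) (d n)))"
      unfolding bounded_iff using bd by blast
    then obtain l r where "strict_mono r" "((\<lambda>k. g (s k) (d n)) \<circ> r) \<longlonglongrightarrow> l"
      using bounded_imp_convergent_subsequence by blast
    thus "\<exists>s'. strict_mono (s'::nat\<Rightarrow>nat) \<and> (\<exists>l. (\<lambda>k. g (s (s' k)) (d n)) \<longlonglongrightarrow> l)"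
      by (auto simp: comp_def)
  qed
  define \<rho> where "\<rho> = nat.diagseq"
  have subseq: "strict_mono \<rho>"
    unfolding \<rho>_def using nat.subseq_diagseq by auto
  have dcnv: "?P n \<rho>" for n
  proof -
    have Pn_seqseq: "?P n (nat.seqseq (Suc n))"
      by (rule nat.seqseq_holds)
    have 1: "(\<lambda>k. g ((nat.seqseq (Suc n) \<circ> (\<lambda>k. nat.fold_reduce (Suc n) k
      (Suc n + k))) k) (d n)) = (\<lambda>k. g (nat.seqseq (Suc n) k) (d n)) \<circ>
      (\<lambda>k. nat.fold_reduce (Suc n) k (Suc n + k))"
      by auto
    have 2: "?P n (\<rho> \<circ> ((+) (Suc n)))"
      unfolding \<rho>_def nat.diagseq_seqseq 1
      by (intro convergent_subseq_convergent Pn_seqseq nat.subseq_diagonal_rest)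
    then obtain L where 3: "(\<lambda>na. g (\<rho> (na + Suc n)) (d n)) \<longlonglongrightarrow> L"
      by (auto simp: add.commute dest: convergentD)
    then have "(\<lambda>k. g (\<rho> k) (d n)) \<longlonglongrightarrow> L"
      by (rule LIMSEQ_offset)
    then show ?thesis
      by (auto simp: convergent_def)
  qed
  have "Cauchy (\<lambda>j. g (\<rho> j) z)" for z
  proof (rule metric_CauchyI)
    fix e :: real assume e: "e > 0"
    define \<eta> where "\<eta> = e / (3 * (Q z + 1))"
    have \<eta>: "\<eta> > 0" unfolding \<eta>_def using e Q[of z] by auto
    have Q\<eta>: "Q z * \<eta> < e / 3"
    proof -
      have "Q z * \<eta> = e / 3 * (Q z / (Q z + 1))" unfolding \<eta>_def using Q[of z] by (simp add: field_simps)
      also have "\<dots> < e / 3 * 1" using e Q[of z] by (intro mult_strict_left_mono) auto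
      finally show ?thesis by simp
    qed
    obtain n where n: "dist (d n) z < \<eta>" using densed[OF \<eta>] by blast
    have "Cauchy (\<lambda>k. g (\<rho> k) (d n))" using dcnv[of n] by (rule convergent_Cauchy)
    then obtain N where N: "\<And>m k. m \<ge> N \<Longrightarrow> k \<ge> N \<Longrightarrow> dist (g (\<rho> m) (d n)) (g (\<rho> k) (d n)) < e / 3"
      using e by (meson metric_CauchyD zero_less_divide_iff zero_less_numeral)
    have close: "dist (g j (d n)) (g j z) < e / 3" for j
    proof -
      have "dist (g j (d n)) (g j z) \<le> Q z * dist (d n) z" by (rule eq)
      also have "\<dots> \<le> Q z * \<eta>" using n Q[of z] by (intro mult_left_mono) auto
      finally show ?thesis using Q\<eta> by linarith
    qed
    show "\<exists>N. \<forall>m\<ge>N. \<forall>k\<ge>N. dist (g (\<rho> m) z) (g (\<rho> k) z) < e"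
    proof (intro exI allI impI)
      fix m k assume m: "m \<ge> N" and k: "k \<ge> N"
      have "dist (g (\<rho> m) z) (g (\<rho> k) z) \<le> dist (g (\<rho> m) z) (g (\<rho> m) (d n)) + dist (g (\<rho> m) (d n)) (g (\<rho> k) (d n)) + dist (g (\<rho> k) (d n)) (g (\<rho> k) z)"
        using dist_triangle[of "g (\<rho> m) z" "g (\<rho> k) z" "g (\<rho> m) (d n)"] dist_triangle[of "g (\<rho> m) (d n)" "g (\<rho> k) z" "g (\<rho> k) (d n)"] by linarith
      also have "\<dots> < e / 3 + e / 3 + e / 3"
        using close[of "\<rho> m"] close[of "\<rho> k"] N[OF m k] by (simp add: dist_commute)
      finally show "dist (g (\<rho> m) z) (g (\<rho> k) z) < e" by simp
    qed
  qed
  then show ?thesis using subseq by (auto simp: Cauchy_convergent_iff)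
qed

lemma AA:
  fixes g :: "nat \<Rightarrow> real \<Rightarrow> 'a::euclidean_space \<Rightarrow> 'a"
  assumes T: "T \<ge> 0" and L: "L \<ge> 0" and M: "M \<ge> 0"
    and lip: "\<And>j t x y. t \<in> {0..T} \<Longrightarrow> dist (g j t x) (g j t y) \<le> L * dist x y"
    and bd: "\<And>j t x. t \<in> {0..T} \<Longrightarrow> norm (g j t x) \<le> E * (1 + norm x)"
    and tm: "\<And>j t s x. t \<in> {0..T} \<Longrightarrow> s \<in> {0..T} \<Longrightarrow> dist (g j t x) (g j s x) \<le> M * (1 + norm x) * \<bar>t - s\<bar>"
  shows "\<exists>\<rho> h. strict_mono \<rho> \<and> (\<forall>t\<in>{0..T}. \<forall>x. (\<lambda>j. g (\<rho> j) t x) \<longlonglongrightarrow> h t x) \<and>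
     (\<forall>x e. e > 0 \<longrightarrow> (\<exists>N. \<forall>j\<ge>N. \<forall>t\<in>{0..T}. dist (g (\<rho> j) t x) (h t x) < e))"
proof -
  define c where "c t = max 0 (min T t)" for t :: real
  have c_in: "c t \<in> {0..T}" for t unfolding c_def using T by auto
  have c_id: "t \<in> {0..T} \<Longrightarrow> c t = t" for t unfolding c_def by auto
  have c_lip: "\<bar>c t - c s\<bar> \<le> \<bar>t - s\<bar>" for t s unfolding c_def by auto
  define g' where "g' j z = g j (c (fst z)) (snd z)" for j and z :: "real \<times> 'a"
  have bd': "norm (g' j z) \<le> E * (1 + norm (snd z))" for j z
    unfolding g'_def by (rule bd[OF c_in])
  have eq': "dist (g' j z') (g' j z) \<le> (L + M * (1 + norm (snd z))) * dist z' z" for j z z'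
  proof -
    have "dist (g' j z') (g' j z) \<le> dist (g j (c (fst z')) (snd z')) (g j (c (fst z')) (snd z)) + dist (g j (c (fst z')) (snd z)) (g j (c (fst z)) (snd z))"
      unfolding g'_def by (rule dist_triangle)
    also have "\<dots> \<le> L * dist (snd z') (snd z) + M * (1 + norm (snd z)) * \<bar>c (fst z') - c (fst z)\<bar>"
      by (intro add_mono lip tm c_in)
    also have "\<dots> \<le> L * dist z' z + M * (1 + norm (snd z)) * dist z' z"
    proof (intro add_mono mult_left_mono)
      show "dist (snd z') (snd z) \<le> dist z' z" by (rule dist_snd_le)
      have "\<bar>c (fst z') - c (fst z)\<bar> \<le> \<bar>fst z' - fst z\<bar>" by (rule c_lip)
      also have "\<dots> = dist (fst z') (fst z)" by (simp add: dist_real_def)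
      also have "\<dots> \<le> dist z' z" by (rule dist_fst_le)
      finally show "\<bar>c (fst z') - c (fst z)\<bar> \<le> dist z' z" .
    qed (use L M in auto)
    finally show ?thesis by (simp add: algebra_simps)
  qed
  obtain \<rho> where \<rho>: "strict_mono \<rho>" and cnv: "\<And>z. convergent (\<lambda>j. g' (\<rho> j) z)"
    using equi_pointwise_subseq[of g' "\<lambda>z. E * (1 + norm (snd z))" "\<lambda>z. L + M * (1 + norm (snd z))", OF bd' eq'] L M
    by auto
  define h where "h t x = lim (\<lambda>j. g' (\<rho> j) (t, x))" for t x
  have lim: "(\<lambda>j. g (\<rho> j) t x) \<longlonglongrightarrow> h t x" if t: "t \<in> {0..T}" for t x
  proof -
    have "(\<lambda>j. g' (\<rho> j) (t, x)) \<longlonglongrightarrow> h t x" unfolding h_def using cnv by (simp add: convergent_LIMSEQ_iff)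
    then show ?thesis unfolding g'_def using c_id[OF t] by simp
  qed
  have htm: "dist (h t x) (h s x) \<le> M * (1 + norm x) * \<bar>t - s\<bar>" if t: "t \<in> {0..T}" and s: "s \<in> {0..T}" for t s x
  proof (rule LIMSEQ_le_const2)
    show "(\<lambda>j. dist (g (\<rho> j) t x) (g (\<rho> j) s x)) \<longlonglongrightarrow> dist (h t x) (h s x)"
      by (intro tendsto_intros lim t s)
    show "\<exists>N. \<forall>j\<ge>N. dist (g (\<rho> j) t x) (g (\<rho> j) s x) \<le> M * (1 + norm x) * \<bar>t - s\<bar>"
      using tm[OF t s] by auto
  qed
  have unif: "\<exists>N. \<forall>j\<ge>N. \<forall>t\<in>{0..T}. dist (g (\<rho> j) t x) (h t x) < e" if e: "e > 0" for x e
  proof -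
    define K where "K = M * (1 + norm x)"
    have K: "K \<ge> 0" unfolding K_def using M by auto
    define \<delta> where "\<delta> = e / (3 * (K + 1))"
    have \<delta>: "\<delta> > 0" unfolding \<delta>_def using e K by auto
    have K\<delta>: "K * \<delta> < e / 3"
    proof -
      have "K * \<delta> = e / 3 * (K / (K + 1))" unfolding \<delta>_def using K by (simp add: field_simps)
      also have "\<dots> < e / 3 * 1" using e K by (intro mult_strict_left_mono) auto
      finally show ?thesis by simp
    qed
    obtain C' where C': "C' \<subseteq> {0..T}" "finite C'" "{0..T} \<subseteq> (\<Union>t\<in>C'. ball t \<delta>)"
      using compactE_image[of "{0..T}" "{0..T}" "\<lambda>t. ball t \<delta>"] \<delta> by force
    have "\<forall>\<^sub>F j in sequentially. \<forall>t'\<in>C'. dist (g (\<rho> j) t' x) (h t' x) < e / 3"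
    proof (rule eventually_ball_finite[OF C'(2)], intro ballI)
      fix t' assume "t' \<in> C'"
      then have t': "t' \<in> {0..T}" using C'(1) by auto
      show "\<forall>\<^sub>F j in sequentially. dist (g (\<rho> j) t' x) (h t' x) < e / 3"
      proof -
        have "e / 3 > 0" using e by simp
        then show ?thesis using lim[OF t', of x] unfolding tendsto_iff by blast
      qed
    qed
    then obtain N where N: "\<And>j t'. j \<ge> N \<Longrightarrow> t' \<in> C' \<Longrightarrow> dist (g (\<rho> j) t' x) (h t' x) < e / 3"
      by (auto simp: eventually_sequentially)
    show ?thesis
    proof (intro exI allI impI ballI)
      fix j t assume j: "j \<ge> N" and t: "t \<in> {0..T}"
      then obtain t' where t'C: "t' \<in> C'" and tt': "dist t' t < \<delta>" using C'(3) by auto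
      have t': "t' \<in> {0..T}" using t'C C'(1) by auto
      have tt'a: "\<bar>t - t'\<bar> \<le> \<delta>" using tt' by (simp add: dist_real_def)
      have "dist (g (\<rho> j) t x) (h t x) \<le> dist (g (\<rho> j) t x) (g (\<rho> j) t' x) + dist (g (\<rho> j) t' x) (h t' x) + dist (h t' x) (h t x)"
        using dist_triangle[of "g (\<rho> j) t x" "h t x" "g (\<rho> j) t' x"] dist_triangle[of "g (\<rho> j) t' x" "h t x" "h t' x"] by linarith
      also have "\<dots> < K * \<delta> + e / 3 + K * \<delta>"
      proof -
        have "dist (g (\<rho> j) t x) (g (\<rho> j) t' x) \<le> K * \<bar>t - t'\<bar>" unfolding K_def by (rule tm[OF t t'])
        also have "\<dots> \<le> K * \<delta>" using tt'a K by (intro mult_left_mono) auto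
        finally have 1: "dist (g (\<rho> j) t x) (g (\<rho> j) t' x) \<le> K * \<delta>" .
        have "dist (h t' x) (h t x) \<le> K * \<bar>t' - t\<bar>" unfolding K_def by (rule htm[OF t' t])
        also have "\<dots> \<le> K * \<delta>" using tt'a K by (intro mult_left_mono) (auto simp: abs_minus_commute)
        finally have 2: "dist (h t' x) (h t x) \<le> K * \<delta>" .
        show ?thesis using 1 2 N[OF j t'C] by linarith
      qed
      also have "\<dots> < e" using K\<delta> by linarith
      finally show "dist (g (\<rho> j) t x) (h t x) < e" .
    qed
  qed
  show ?thesis using \<rho> lim unif by blast
qed



lemma lip_borel:
  fixes f :: "'a::euclidean_space \<Rightarrow> 'c::euclidean_space"
  assumes "\<And>x y. dist (f x) (f y) \<le> L * dist x y" "L \<ge> 0"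
  shows "f \<in> borel_measurable borel"
  by (rule borel_measurable_continuous_onI, rule lipschitz_on_continuous_on, rule lipschitz_onI) (use assms in auto)

lemma W1_distr_le:
  fixes \<theta> :: "'a::euclidean_space measure"
  assumes s: "sets \<theta> = sets borel" and gm: "g \<in> borel_measurable borel" and hm: "h \<in> borel_measurable borel"
  shows "W1 (distr \<theta> borel g) (distr \<theta> borel h) \<le> (\<integral>\<^sup>+ x. ennreal (dist (g x) (h x)) \<partial>\<theta>)"
proof -
  have gm': "g \<in> measurable \<theta> borel" using gm by (simp add: measurable_cong_sets[OF s refl])
  have hm': "h \<in> measurable \<theta> borel" using hm by (simp add: measurable_cong_sets[OF s refl])
  have pm: "(\<lambda>x. (g x, h x)) \<in> measurable \<theta> (borel \<Otimes>\<^sub>M borel)"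
    by (rule measurable_Pair[OF gm' hm'])
  define \<gamma> where "\<gamma> = distr \<theta> (borel \<Otimes>\<^sub>M borel) (\<lambda>x. (g x, h x))"
  have "\<gamma> \<in> couplings (distr \<theta> borel g) (distr \<theta> borel h)"
  proof -
    have "distr \<gamma> borel fst = distr \<theta> borel (fst \<circ> (\<lambda>x. (g x, h x)))"
      unfolding \<gamma>_def by (rule distr_distr[OF measurable_fst pm])
    moreover have "distr \<gamma> borel snd = distr \<theta> borel (snd \<circ> (\<lambda>x. (g x, h x)))"
      unfolding \<gamma>_def by (rule distr_distr[OF measurable_snd pm])
    ultimately show ?thesis unfolding couplings_def \<gamma>_def by (simp add: comp_def)
  qed
  then have "W1 (distr \<theta> borel g) (distr \<theta> borel h) \<le> (\<integral>\<^sup>+ z. ennreal (dist (fst z) (snd z)) \<partial>\<gamma>)"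
    unfolding W1_def by (rule INF_lower)
  also have "\<dots> = (\<integral>\<^sup>+ x. ennreal (dist (g x) (h x)) \<partial>\<theta>)"
    unfolding \<gamma>_def by (subst nn_integral_distr[OF pm]) (auto intro!: borel_measurable_dist measurable_fst'' measurable_snd'')
  finally show ?thesis .
qed

lemma P1_props:
  assumes "\<theta> \<in> P1"
  shows "prob_space \<theta>" "sets \<theta> = sets borel" "integrable \<theta> norm"
  using assms unfolding P1_def by auto

lemma P1_affine_int:
  fixes \<theta> :: "'a::euclidean_space measure"
  assumes "\<theta> \<in> P1"
  shows "integrable \<theta> (\<lambda>x. a * (1 + norm x))"
proof -
  interpret prob_space \<theta> using P1_props[OF assms] by simp
  have "integrable \<theta> (\<lambda>x. 1 + norm x)"
    using P1_props(3)[OF assms] by (intro Bochner_Integration.integrable_add) auto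
  then show ?thesis by (rule integrable_mult_right)
qed

lemma P1_distr:
  fixes \<theta> :: "'a::euclidean_space measure"
  assumes th: "\<theta> \<in> P1" and hm: "h \<in> borel_measurable borel" and hb: "\<And>x. norm (h x) \<le> E * (1 + norm x)"
  shows "distr \<theta> borel h \<in> P1"
proof -
  have s: "sets \<theta> = sets borel" using P1_props[OF th] by simp
  have hm': "h \<in> measurable \<theta> borel" using hm by (simp add: measurable_cong_sets[OF s refl])
  interpret prob_space \<theta> using P1_props[OF th] by simp
  have "prob_space (distr \<theta> borel h)" by (rule prob_space_distr[OF hm'])
  moreover have "integrable (distr \<theta> borel h) norm"
  proof (subst integrable_distr_eq[OF hm'])
    show "norm \<in> borel_measurable borel" by measurable
    show "integrable \<theta> (\<lambda>x. norm (h x))"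
    proof (rule Bochner_Integration.integrable_bound[OF P1_affine_int[OF th, of E]])
      show "(\<lambda>x. norm (h x)) \<in> borel_measurable \<theta>" using hm' by measurable
      show "AE x in \<theta>. norm (norm (h x)) \<le> norm (E * (1 + norm x))"
        using hb by (auto intro: order_trans abs_ge_self)
    qed
  qed
  ultimately show ?thesis unfolding P1_def by simp
qed

section \<open>Partitions\<close>

lemma part_mono:
  assumes p: "is_partition T K p" and ij: "i \<le> j" and jK: "j \<le> K"
  shows "p i \<le> p j"
  using ij jK
proof (induction j rule: dec_induct)
  case base then show ?case by simp
next
  case (step j)
  then have "p j < p (Suc j)" using p unfolding is_partition_def by auto
  with step show ?case by simp
qed

lemma part_strict:
  assumes p: "is_partition T K p" and ij: "i < j" and jK: "j \<le> K"
  shows "p i < p j"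
proof -
  have "p i < p (Suc i)" using p ij jK unfolding is_partition_def by auto
  also have "\<dots> \<le> p j" using part_mono[OF p, of "Suc i" j] ij jK by auto
  finally show ?thesis .
qed

lemma part_range:
  assumes p: "is_partition T K p" and iK: "i \<le> K"
  shows "p i \<in> {0..T}"
  using part_mono[OF p, of 0 i] part_mono[OF p, of i K] iK p unfolding is_partition_def by auto

lemma part_greatest:
  assumes p: "is_partition T K p" and t: "t \<in> {0..T}"
  shows "(GREATEST k. k < K \<and> p k \<le> t) < K \<and> p (GREATEST k. k < K \<and> p k \<le> t) \<le> t \<and> t \<le> p (Suc (GREATEST k. k < K \<and> p k \<le> t))"
proof -
  let ?P = "\<lambda>k. k < K \<and> p k \<le> t"
  let ?g = "GREATEST k. ?P k"
  have P0: "?P 0" using p t unfolding is_partition_def by auto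
  have bnd: "\<forall>y. ?P y \<longrightarrow> y \<le> K" by auto
  have Pg: "?P ?g" by (rule GreatestI_nat[where P="?P" and b=K, OF P0]) auto
  have "t \<le> p (Suc ?g)"
  proof (cases "Suc ?g < K")
    case True
    have "\<not> ?P (Suc ?g)"
    proof
      assume "?P (Suc ?g)"
      then have "Suc ?g \<le> ?g" by (rule Greatest_le_nat) (use bnd in blast)
      then show False by simp
    qed
    then show ?thesis using True by auto
  next
    case False
    then have "Suc ?g = K" using Pg by auto
    then show ?thesis using p t unfolding is_partition_def by auto
  qed
  then show ?thesis using Pg by auto
qed

lemma part_greatest_eq:
  assumes p: "is_partition T K p" and k: "k < K" and pk: "p k \<le> t"
    and up: "Suc k < K \<Longrightarrow> t < p (Suc k)"
  shows "(GREATEST k. k < K \<and> p k \<le> t) = k"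
proof (rule Greatest_equality)
  show "k < K \<and> p k \<le> t" using k pk by auto
  fix y assume y: "y < K \<and> p y \<le> t"
  show "y \<le> k"
  proof (rule ccontr)
    assume "\<not> y \<le> k"
    then have "Suc k \<le> y" by simp
    then have "p (Suc k) \<le> p y" using part_mono[OF p] y by auto
    moreover have "Suc k < K" using \<open>Suc k \<le> y\<close> y by auto
    ultimately show False using up y by auto
  qed
qed

lemma piecewise_lip:
  fixes f :: "real \<Rightarrow> 'a::metric_space"
  assumes p: "is_partition T K p"
    and loc: "\<And>k s t. k < K \<Longrightarrow> s \<in> {p k..p (Suc k)} \<Longrightarrow> t \<in> {p k..p (Suc k)} \<Longrightarrow> dist (f t) (f s) \<le> \<Lambda> * \<bar>t - s\<bar>"
    and s: "s \<in> {0..T}" and t: "t \<in> {0..T}"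
  shows "dist (f t) (f s) \<le> \<Lambda> * \<bar>t - s\<bar>"
proof -
  have p0: "p 0 = 0" and pK: "p K = T" using p unfolding is_partition_def by auto
  have main: "\<forall>s t. s \<in> {0..p m} \<longrightarrow> t \<in> {0..p m} \<longrightarrow> s \<le> t \<longrightarrow> dist (f t) (f s) \<le> \<Lambda> * (t - s)"
    if "m \<le> K" for m
    using that
  proof (induction m)
    case 0 then show ?case using p0 by auto
  next
    case (Suc m)
    have mK: "m < K" using Suc by auto
    show ?case
    proof (intro allI impI)
      fix s t assume s: "s \<in> {0..p (Suc m)}" and t: "t \<in> {0..p (Suc m)}" and st: "s \<le> t"
      have pm: "p m \<le> p (Suc m)" using part_mono[OF p, of m "Suc m"] mK by auto
      have pm0: "0 \<le> p m" using part_range[OF p, of m] mK by auto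
      show "dist (f t) (f s) \<le> \<Lambda> * (t - s)"
      proof (cases "t \<le> p m")
        case True then show ?thesis using Suc.IH mK s st by auto
      next
        case tm: False
        show ?thesis
        proof (cases "p m \<le> s")
          case True
          then show ?thesis using loc[OF mK, of s t] s t st by auto
        next
          case False
          have "dist (f t) (f s) \<le> dist (f t) (f (p m)) + dist (f (p m)) (f s)" by (rule dist_triangle)
          also have "dist (f t) (f (p m)) \<le> \<Lambda> * (t - p m)"
            using loc[OF mK, of "p m" t] t tm pm by auto
          also have "dist (f (p m)) (f s) \<le> \<Lambda> * (p m - s)"
            using Suc.IH mK s False pm0 by auto
          finally show ?thesis by (simp add: algebra_simps)
        qed
      qed
    qed
  qed
  show ?thesis
  proof (cases "s \<le> t")
    case True then show ?thesis using main[of K] pK s t by auto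
  next
    case False then show ?thesis using main[of K, rule_format, of t s] pK s t by (auto simp: dist_commute)
  qed
qed


section \<open>Sampling polygons\<close>

locale sampsys = odesys F U C for F :: "'a::euclidean_space \<Rightarrow> 'b::euclidean_space \<Rightarrow> 'a" and U C +
  fixes T :: real and G :: "real \<Rightarrow> 'a measure \<Rightarrow> real \<Rightarrow> 'b" and \<theta> :: "'a measure"
  assumes Tpos: "T > 0"
    and Gadm: "\<And>t \<mu>. t \<in> {0..T} \<Longrightarrow> \<mu> \<in> space (prob_algebra borel) \<Longrightarrow> G t \<mu> \<in> ctrl_space T U"
    and theta: "\<theta> \<in> P1"
begin

lemma ctrl_adm: "w \<in> ctrl_space T U \<Longrightarrow> 0 \<le> a \<Longrightarrow> b \<le> T \<Longrightarrow> adm w a b"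
  unfolding ctrl_space_def adm_def by (auto intro: measurable_restrict_mono)

definition wk :: "(nat \<Rightarrow> real) \<Rightarrow> nat \<Rightarrow> real \<Rightarrow> 'b" where
  "wk p k = G (p k) (node F G \<theta> p k)"

primrec Psi :: "(nat \<Rightarrow> real) \<Rightarrow> nat \<Rightarrow> 'a \<Rightarrow> 'a" where
  "Psi p 0 = (\<lambda>x. x)"
| "Psi p (Suc k) = (\<lambda>x. flow F (wk p k) (p k) (p (Suc k)) (Psi p k x))"

definition Phi :: "nat \<Rightarrow> (nat \<Rightarrow> real) \<Rightarrow> real \<Rightarrow> 'a \<Rightarrow> 'a" where
  "Phi K p t x = (let k = (GREATEST k. k < K \<and> p k \<le> t) in flow F (wk p k) (p k) t (Psi p k x))"

lemma th_sets: "sets \<theta> = sets borel" and th_prob: "prob_space \<theta>"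
  using P1_props[OF theta] by auto

lemma distr_in_prob_algebra:
  assumes "f \<in> borel_measurable borel"
  shows "distr \<theta> borel f \<in> space (prob_algebra borel)"
proof -
  interpret prob_space \<theta> by (rule th_prob)
  have "f \<in> measurable \<theta> borel" using assms by (simp add: measurable_cong_sets[OF th_sets refl])
  then show ?thesis unfolding space_prob_algebra by (auto intro: prob_space_distr)
qed

lemma node_psi:
  assumes p: "is_partition T K p"
  shows "k \<le> K \<Longrightarrow> node F G \<theta> p k = distr \<theta> borel (Psi p k) \<and>
    (\<forall>x y. dist (Psi p k x) (Psi p k y) \<le> exp (C * p k) * dist x y) \<and>
    (\<forall>x. 1 + norm (Psi p k x) \<le> (1 + norm x) * exp (C * p k))"
proof (induction k)
  case 0
  have p0: "p 0 = 0" using p unfolding is_partition_def by auto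
  show ?case using p0 by (simp add: distr_id2[OF th_sets[symmetric]])
next
  case (Suc k)
  have kK: "k < K" using Suc by auto
  from Suc.IH kK have IH: "node F G \<theta> p k = distr \<theta> borel (Psi p k)"
    "\<And>x y. dist (Psi p k x) (Psi p k y) \<le> exp (C * p k) * dist x y"
    "\<And>x. 1 + norm (Psi p k x) \<le> (1 + norm x) * exp (C * p k)" by auto
  have Psim: "Psi p k \<in> borel_measurable borel" by (rule lip_borel[OF IH(2)]) simp
  have pk: "p k \<in> {0..T}" using part_range[OF p] kK by auto
  have pk1: "p (Suc k) \<in> {0..T}" using part_range[OF p] kK by auto
  have pkk: "p k \<le> p (Suc k)" using part_mono[OF p, of k "Suc k"] kK by auto
  have w: "adm (wk p k) (p k) (p (Suc k))"
    unfolding wk_def using pk pk1 IH(1) distr_in_prob_algebra[OF Psim]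
    by (intro ctrl_adm Gadm) auto
  have sk: "p (Suc k) \<in> {p k..p (Suc k)}" using pkk by auto
  let ?fl = "flow F (wk p k) (p k) (p (Suc k))"
  have fllip: "dist (?fl x) (?fl y) \<le> exp (C * (p (Suc k) - p k)) * dist x y" for x y
    by (rule flow_lip[OF w sk])
  have flm: "?fl \<in> borel_measurable borel" by (rule lip_borel[OF fllip]) simp
  have Psim': "Psi p k \<in> measurable \<theta> borel" using Psim by (simp add: measurable_cong_sets[OF th_sets refl])
  have "node F G \<theta> p (Suc k) = distr (distr \<theta> borel (Psi p k)) borel ?fl"
    by (simp add: mu_sol_def IH(1)[symmetric] wk_def)
  also have "\<dots> = distr \<theta> borel (?fl \<circ> Psi p k)" by (rule distr_distr[OF flm Psim'])
  also have "\<dots> = distr \<theta> borel (Psi p (Suc k))" by (simp add: comp_def)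
  finally have 1: "node F G \<theta> p (Suc k) = distr \<theta> borel (Psi p (Suc k))" .
  have eadd: "exp (C * (p (Suc k) - p k)) * exp (C * p k) = exp (C * p (Suc k))"
    by (simp add: exp_add[symmetric] algebra_simps)
  have 2: "dist (Psi p (Suc k) x) (Psi p (Suc k) y) \<le> exp (C * p (Suc k)) * dist x y" for x y
  proof -
    have "dist (Psi p (Suc k) x) (Psi p (Suc k) y) \<le> exp (C * (p (Suc k) - p k)) * dist (Psi p k x) (Psi p k y)"
      using fllip by simp
    also have "\<dots> \<le> exp (C * (p (Suc k) - p k)) * (exp (C * p k) * dist x y)"
      by (intro mult_left_mono IH(2)) auto
    finally show ?thesis using eadd by (simp add: mult.assoc[symmetric])
  qed
  have 3: "1 + norm (Psi p (Suc k) x) \<le> (1 + norm x) * exp (C * p (Suc k))" for x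
  proof -
    have "1 + norm (Psi p (Suc k) x) \<le> (1 + norm (Psi p k x)) * exp (C * (p (Suc k) - p k))"
      using flow_bound[OF w sk] by simp
    also have "\<dots> \<le> ((1 + norm x) * exp (C * p k)) * exp (C * (p (Suc k) - p k))"
      by (intro mult_right_mono IH(3)) auto
    also have "\<dots> = (1 + norm x) * exp (C * p (Suc k))"
      using eadd by (simp add: algebra_simps)
    finally show ?thesis .
  qed
  show ?case using 1 2 3 by blast
qed

lemma wk_adm:
  assumes p: "is_partition T K p" and kK: "k < K"
  shows "adm (wk p k) (p k) (p (Suc k))"
proof -
  have IH: "node F G \<theta> p k = distr \<theta> borel (Psi p k)"
    "\<And>x y. dist (Psi p k x) (Psi p k y) \<le> exp (C * p k) * dist x y"
    using node_psi[OF p, of k] kK by auto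
  have Psim: "Psi p k \<in> borel_measurable borel" by (rule lip_borel[OF IH(2)]) simp
  have pk: "p k \<in> {0..T}" using part_range[OF p] kK by auto
  have pk1: "p (Suc k) \<in> {0..T}" using part_range[OF p] kK by auto
  show ?thesis
    unfolding wk_def using pk pk1 IH(1) distr_in_prob_algebra[OF Psim]
    by (intro ctrl_adm Gadm) auto
qed

lemma Phi_on:
  assumes p: "is_partition T K p" and kK: "k < K" and t: "t \<in> {p k..p (Suc k)}"
  shows "Phi K p t x = flow F (wk p k) (p k) t (Psi p k x)"
proof (cases "t < p (Suc k) \<or> Suc k = K")
  case True
  have "(GREATEST k. k < K \<and> p k \<le> t) = k"
    by (rule part_greatest_eq[OF p kK]) (use t True in auto)
  then show ?thesis unfolding Phi_def Let_def by simp
next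
  case False
  then have t1: "t = p (Suc k)" and k1: "Suc k < K" using t kK by auto
  have "(GREATEST k. k < K \<and> p k \<le> t) = Suc k"
    by (rule part_greatest_eq[OF p k1]) (use t1 part_strict[OF p, of "Suc k" "Suc (Suc k)"] k1 in auto)
  then have "Phi K p t x = flow F (wk p (Suc k)) (p (Suc k)) (p (Suc k)) (Psi p (Suc k) x)"
    unfolding Phi_def Let_def using t1 by simp
  also have "\<dots> = Psi p (Suc k) x"
    using wk_adm[OF p k1] part_mono[OF p, of "Suc k" "Suc (Suc k)"] k1 by (intro flow_start) auto
  also have "\<dots> = flow F (wk p k) (p k) t (Psi p k x)" using t1 by simp
  finally show ?thesis .
qed

lemma Phi_props:
  assumes p: "is_partition T K p" and t: "t \<in> {0..T}"
  shows "dist (Phi K p t x) (Phi K p t y) \<le> exp (C * T) * dist x y"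
    and "1 + norm (Phi K p t x) \<le> (1 + norm x) * exp (C * T)"
proof -
  let ?k = "GREATEST k. k < K \<and> p k \<le> t"
  have k: "?k < K" "p ?k \<le> t" "t \<le> p (Suc ?k)" using part_greatest[OF p t] by auto
  have tk: "t \<in> {p ?k..p (Suc ?k)}" using k by auto
  have w: "adm (wk p ?k) (p ?k) (p (Suc ?k))" by (rule wk_adm[OF p k(1)])
  have N: "\<And>x y. dist (Psi p ?k x) (Psi p ?k y) \<le> exp (C * p ?k) * dist x y"
    "\<And>x. 1 + norm (Psi p ?k x) \<le> (1 + norm x) * exp (C * p ?k)"
    using node_psi[OF p, of ?k] k by auto
  have eadd: "exp (C * (t - p ?k)) * exp (C * p ?k) = exp (C * t)"
    by (simp add: exp_add[symmetric] algebra_simps)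
  have eT: "exp (C * t) \<le> exp (C * T)" using t Cpos by auto
  have "dist (Phi K p t x) (Phi K p t y) \<le> exp (C * (t - p ?k)) * dist (Psi p ?k x) (Psi p ?k y)"
    unfolding Phi_on[OF p k(1) tk] by (rule flow_lip[OF w tk])
  also have "\<dots> \<le> exp (C * (t - p ?k)) * (exp (C * p ?k) * dist x y)"
    by (intro mult_left_mono N) auto
  also have "\<dots> = exp (C * t) * dist x y" using eadd by (simp add: mult.assoc[symmetric])
  also have "\<dots> \<le> exp (C * T) * dist x y" using eT by (intro mult_right_mono) auto
  finally show "dist (Phi K p t x) (Phi K p t y) \<le> exp (C * T) * dist x y" .
  have "1 + norm (Phi K p t x) \<le> (1 + norm (Psi p ?k x)) * exp (C * (t - p ?k))"
    unfolding Phi_on[OF p k(1) tk] by (rule flow_bound[OF w tk])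
  also have "\<dots> \<le> ((1 + norm x) * exp (C * p ?k)) * exp (C * (t - p ?k))"
    by (intro mult_right_mono N) auto
  also have "\<dots> = (1 + norm x) * exp (C * t)" using eadd by (simp add: algebra_simps)
  also have "\<dots> \<le> (1 + norm x) * exp (C * T)" using eT by (intro mult_left_mono) auto
  finally show "1 + norm (Phi K p t x) \<le> (1 + norm x) * exp (C * T)" .
qed

lemma Phi_time:
  assumes p: "is_partition T K p" and t: "t \<in> {0..T}" and s: "s \<in> {0..T}"
  shows "dist (Phi K p t x) (Phi K p s x) \<le> (C * exp (C * T) * (1 + norm x)) * \<bar>t - s\<bar>"
proof (rule piecewise_lip[OF p _ s t])
  fix k s t assume kK: "k < K" and s: "s \<in> {p k..p (Suc k)}" and t: "t \<in> {p k..p (Suc k)}"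
  have w: "adm (wk p k) (p k) (p (Suc k))" by (rule wk_adm[OF p kK])
  have N: "1 + norm (Psi p k x) \<le> (1 + norm x) * exp (C * p k)"
    using node_psi[OF p, of k] kK by auto
  have eadd: "exp (C * p k) * exp (C * (p (Suc k) - p k)) = exp (C * p (Suc k))"
    by (simp add: exp_add[symmetric] algebra_simps)
  have eT: "exp (C * p (Suc k)) \<le> exp (C * T)" using part_range[OF p, of "Suc k"] kK Cpos by auto
  have "dist (Phi K p t x) (Phi K p s x) \<le> C * (1 + norm (Psi p k x)) * exp (C * (p (Suc k) - p k)) * \<bar>t - s\<bar>"
    unfolding Phi_on[OF p kK t] Phi_on[OF p kK s] by (rule flow_time[OF w t s])
  also have "\<dots> \<le> C * ((1 + norm x) * exp (C * p k)) * exp (C * (p (Suc k) - p k)) * \<bar>t - s\<bar>"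
    using Cpos N by (intro mult_right_mono mult_left_mono) auto
  also have "\<dots> = C * (1 + norm x) * exp (C * p (Suc k)) * \<bar>t - s\<bar>"
    using eadd by (simp add: algebra_simps)
  also have "\<dots> \<le> C * (1 + norm x) * exp (C * T) * \<bar>t - s\<bar>"
    using eT Cpos by (intro mult_right_mono mult_left_mono) auto
  finally show "dist (Phi K p t x) (Phi K p s x) \<le> (C * exp (C * T) * (1 + norm x)) * \<bar>t - s\<bar>"
    by (simp add: algebra_simps)
qed

lemma poly_eq:
  assumes p: "is_partition T K p" and t: "t \<in> {0..T}"
  shows "polygon F G \<theta> K p t = distr \<theta> borel (Phi K p t)"
proof -
  let ?k = "GREATEST k. k < K \<and> p k \<le> t"
  have k: "?k < K" "p ?k \<le> t" "t \<le> p (Suc ?k)" using part_greatest[OF p t] by auto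
  have tk: "t \<in> {p ?k..p (Suc ?k)}" using k by auto
  have w: "adm (wk p ?k) (p ?k) (p (Suc ?k))" by (rule wk_adm[OF p k(1)])
  have N: "node F G \<theta> p ?k = distr \<theta> borel (Psi p ?k)"
    "\<And>x y. dist (Psi p ?k x) (Psi p ?k y) \<le> exp (C * p ?k) * dist x y"
    using node_psi[OF p, of ?k] k by auto
  have Psim: "Psi p ?k \<in> measurable \<theta> borel"
    using lip_borel[OF N(2)] by (simp add: measurable_cong_sets[OF th_sets refl])
  have flm: "flow F (wk p ?k) (p ?k) t \<in> borel_measurable borel"
    by (rule lip_borel[OF flow_lip[OF w tk]]) simp
  have "polygon F G \<theta> K p t = distr (distr \<theta> borel (Psi p ?k)) borel (flow F (wk p ?k) (p ?k) t)"
    unfolding polygon_def Let_def N(1)[symmetric] wk_def mu_sol_def ..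
  also have "\<dots> = distr \<theta> borel (flow F (wk p ?k) (p ?k) t \<circ> Psi p ?k)"
    by (rule distr_distr[OF flm Psim])
  also have "\<dots> = distr \<theta> borel (Phi K p t)"
    unfolding Phi_def Let_def by (simp add: comp_def)
  finally show ?thesis .
qed


lemma exists_solution: "sampling_solutions F G \<theta> T \<noteq> {}"
proof -
  define Kj where "Kj j = Suc j" for j :: nat
  define Pj where "Pj j k = T * real k / real (Suc j)" for j k :: nat
  have part: "is_partition T (Kj j) (Pj j)" for j
  proof -
    have "T * real k / real (Suc j) < T * real (Suc k) / real (Suc j)" for k
      by (intro divide_strict_right_mono) (use Tpos in \<open>auto simp: algebra_simps\<close>)
    then show ?thesis unfolding is_partition_def Kj_def Pj_def by auto
  qed
  have diam: "diam (Kj j) (Pj j) = T / real (Suc j)" for j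
  proof -
    have d: "Pj j (Suc k) - Pj j k = T / real (Suc j)" for k
      unfolding Pj_def by (simp add: diff_divide_distrib[symmetric] algebra_simps)
    have "{Pj j (Suc k) - Pj j k |k. k < Kj j} = {T / real (Suc j)}"
      unfolding Kj_def using d by auto
    then show ?thesis unfolding diam_def by simp
  qed
  have diam_lim: "(\<lambda>j. T / real (Suc j)) \<longlonglongrightarrow> 0"
    using LIMSEQ_Suc[OF lim_const_over_n[of T]] by simp
  define g where "g j = Phi (Kj j) (Pj j)" for j
  define E where "E = exp (C * T)"
  have E0: "E \<ge> 0" unfolding E_def by simp
  have T0: "T \<ge> 0" using Tpos by simp
  have M0: "C * E \<ge> 0" using Cpos E0 by simp
  have glip: "\<And>j t x y. t \<in> {0..T} \<Longrightarrow> dist (g j t x) (g j t y) \<le> E * dist x y"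
    unfolding g_def E_def by (rule Phi_props(1)[OF part])
  have gbd: "\<And>j t x. t \<in> {0..T} \<Longrightarrow> norm (g j t x) \<le> E * (1 + norm x)"
  proof -
    fix j t x assume t: "t \<in> {0..T}"
    have "1 + norm (g j t x) \<le> (1 + norm x) * E" unfolding g_def E_def by (rule Phi_props(2)[OF part t])
    then show "norm (g j t x) \<le> E * (1 + norm x)" by (simp add: algebra_simps)
  qed
  have gtm: "\<And>j t s x. t \<in> {0..T} \<Longrightarrow> s \<in> {0..T} \<Longrightarrow> dist (g j t x) (g j s x) \<le> (C * E) * (1 + norm x) * \<bar>t - s\<bar>"
    unfolding g_def E_def by (rule Phi_time[OF part])
  obtain \<rho> h where rho: "strict_mono \<rho>"
    and lim: "\<And>t x. t \<in> {0..T} \<Longrightarrow> (\<lambda>j. g (\<rho> j) t x) \<longlonglongrightarrow> h t x"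
    and unif: "\<And>x e. e > 0 \<Longrightarrow> \<exists>N. \<forall>j\<ge>N. \<forall>t\<in>{0..T}. dist (g (\<rho> j) t x) (h t x) < e"
    using AA[where T=T and L=E and M="C * E" and E=E and g=g, OF T0 E0 M0 glip gbd gtm] by blast
  have hlip: "dist (h t x) (h t y) \<le> E * dist x y" if t: "t \<in> {0..T}" for t x y
  proof (rule LIMSEQ_le_const2)
    show "(\<lambda>j. dist (g (\<rho> j) t x) (g (\<rho> j) t y)) \<longlonglongrightarrow> dist (h t x) (h t y)"
      by (intro tendsto_intros lim t)
  qed (use glip[OF t] in auto)
  have hbd: "norm (h t x) \<le> E * (1 + norm x)" if t: "t \<in> {0..T}" for t x
  proof (rule LIMSEQ_le_const2)
    show "(\<lambda>j. norm (g (\<rho> j) t x)) \<longlonglongrightarrow> norm (h t x)"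
      by (intro tendsto_intros lim t)
  qed (use gbd[OF t] in auto)
  have htm: "dist (h t x) (h s x) \<le> (C * E) * (1 + norm x) * \<bar>t - s\<bar>" if t: "t \<in> {0..T}" and s: "s \<in> {0..T}" for t s x
  proof (rule LIMSEQ_le_const2)
    show "(\<lambda>j. dist (g (\<rho> j) t x) (g (\<rho> j) s x)) \<longlonglongrightarrow> dist (h t x) (h s x)"
      by (intro tendsto_intros lim t s)
  qed (use gtm[OF t s] in auto)
  have hm: "h t \<in> borel_measurable borel" if t: "t \<in> {0..T}" for t
    by (rule lip_borel[OF hlip[OF t] E0])
  have gm: "g j t \<in> borel_measurable borel" if t: "t \<in> {0..T}" for j t
    by (rule lip_borel[OF glip[OF t] E0])
  define \<mu> where "\<mu> t = distr \<theta> borel (h t)" for t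
  have intJ: "integrable \<theta> (\<lambda>x. a * (1 + norm x))" for a by (rule P1_affine_int[OF theta])
  define J where "J = integral\<^sup>L \<theta> (\<lambda>x. 1 + norm x)"
  have CP: "\<mu> \<in> CP1 T"
    unfolding CP1_def
  proof (intro CollectI conjI ballI)
    fix t assume t: "t \<in> {0..T}"
    show "\<mu> t \<in> P1" unfolding \<mu>_def by (rule P1_distr[OF theta hm[OF t] hbd[OF t]])
    have bound: "W1 (\<mu> s) (\<mu> t) \<le> ennreal (\<bar>s - t\<bar> * (C * E) * J)" if s: "s \<in> {0..T}" for s
    proof -
      have "W1 (\<mu> s) (\<mu> t) \<le> (\<integral>\<^sup>+ x. ennreal (dist (h s x) (h t x)) \<partial>\<theta>)"
        unfolding \<mu>_def by (rule W1_distr_le[OF th_sets hm[OF s] hm[OF t]])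
      also have "\<dots> \<le> (\<integral>\<^sup>+ x. ennreal ((\<bar>s - t\<bar> * (C * E)) * (1 + norm x)) \<partial>\<theta>)"
      proof (intro nn_integral_mono ennreal_leI)
        fix x
        have "dist (h s x) (h t x) \<le> (C * E) * (1 + norm x) * \<bar>s - t\<bar>" by (rule htm[OF s t])
        then show "dist (h s x) (h t x) \<le> (\<bar>s - t\<bar> * (C * E)) * (1 + norm x)" by (simp add: algebra_simps)
      qed
      also have "\<dots> = ennreal (integral\<^sup>L \<theta> (\<lambda>x. (\<bar>s - t\<bar> * (C * E)) * (1 + norm x)))"
        by (rule nn_integral_eq_integral[OF intJ]) (use M0 in auto)
      also have "\<dots> = ennreal (\<bar>s - t\<bar> * (C * E) * J)" unfolding J_def by simp
      finally show ?thesis .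
    qed
    have "((\<lambda>s. \<bar>s - t\<bar> * (C * E) * J) \<longlongrightarrow> \<bar>t - t\<bar> * (C * E) * J) (at t within {0..T})"
      by (intro tendsto_intros)
    then have "((\<lambda>s. ennreal (\<bar>s - t\<bar> * (C * E) * J)) \<longlongrightarrow> ennreal 0) (at t within {0..T})"
      by (intro tendsto_ennrealI) simp
    then have L2: "((\<lambda>s. ennreal (\<bar>s - t\<bar> * (C * E) * J)) \<longlongrightarrow> 0) (at t within {0..T})" by simp
    show "((\<lambda>s. W1 (\<mu> s) (\<mu> t)) \<longlongrightarrow> 0) (at t within {0..T})"
    proof (rule tendsto_sandwich[OF _ _ tendsto_const L2])
      show "\<forall>\<^sub>F s in at t within {0..T}. 0 \<le> W1 (\<mu> s) (\<mu> t)" by simp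
      show "\<forall>\<^sub>F s in at t within {0..T}. W1 (\<mu> s) (\<mu> t) \<le> ennreal (\<bar>s - t\<bar> * (C * E) * J)"
        unfolding eventually_at_filter by (intro always_eventually) (auto intro: bound)
    qed
  qed
  define S where "S j x = (SUP t\<in>{0..T}. dist (g (\<rho> j) t x) (h t x))" for j x
  have bdd: "bdd_above ((\<lambda>t. dist (g (\<rho> j) t x) (h t x)) ` {0..T})" for j x
  proof (rule bdd_aboveI2)
    fix t assume t: "t \<in> {0..T}"
    have "dist (g (\<rho> j) t x) (h t x) \<le> norm (g (\<rho> j) t x) + norm (h t x)"
      by (simp add: dist_norm norm_triangle_ineq4)
    also have "\<dots> \<le> E * (1 + norm x) + E * (1 + norm x)" using gbd[OF t] hbd[OF t] by (intro add_mono)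
    finally show "dist (g (\<rho> j) t x) (h t x) \<le> 2 * E * (1 + norm x)" by simp
  qed
  have le_S: "dist (g (\<rho> j) t x) (h t x) \<le> S j x" if "t \<in> {0..T}" for j t x
    unfolding S_def by (rule cSUP_upper[OF that bdd])
  have S0: "S j x \<ge> 0" for j x using le_S[of 0 j x] T0 by (meson atLeastAtMost_iff order_refl zero_le_dist order_trans)
  have S_bd: "S j x \<le> 2 * E * (1 + norm x)" for j x
    unfolding S_def
  proof (rule cSUP_least)
    show "{0..T} \<noteq> {}" using T0 by auto
    fix t assume t: "t \<in> {0..T}"
    have "dist (g (\<rho> j) t x) (h t x) \<le> norm (g (\<rho> j) t x) + norm (h t x)"
      by (simp add: dist_norm norm_triangle_ineq4)
    also have "\<dots> \<le> E * (1 + norm x) + E * (1 + norm x)" using gbd[OF t] hbd[OF t] by (intro add_mono)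
    finally show "dist (g (\<rho> j) t x) (h t x) \<le> 2 * E * (1 + norm x)" by simp
  qed
  have S_one: "S j x \<le> S j y + 2 * E * dist x y" for j x y
    unfolding S_def
  proof (rule cSUP_least)
    show "{0..T} \<noteq> {}" using T0 by auto
    fix t assume t: "t \<in> {0..T}"
    have "dist (g (\<rho> j) t x) (h t x) \<le> dist (g (\<rho> j) t x) (g (\<rho> j) t y) + dist (g (\<rho> j) t y) (h t y) + dist (h t y) (h t x)"
      using dist_triangle[of "g (\<rho> j) t x" "h t x" "g (\<rho> j) t y"] dist_triangle[of "g (\<rho> j) t y" "h t x" "h t y"] by linarith
    also have "\<dots> \<le> E * dist x y + S j y + E * dist x y"
      using glip[OF t, of "\<rho> j" x y] le_S[OF t, of j y] hlip[OF t, of y x] by (simp add: dist_commute)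
    finally show "dist (g (\<rho> j) t x) (h t x) \<le> (SUP t\<in>{0..T}. dist (g (\<rho> j) t y) (h t y)) + 2 * E * dist x y"
      unfolding S_def by simp
  qed
  have S_lip: "dist (S j x) (S j y) \<le> (2 * E) * dist x y" for j x y
    using S_one[of j x y] S_one[of j y x] by (simp add: dist_real_def dist_commute abs_le_iff)
  have S_meas: "S j \<in> borel_measurable \<theta>" for j
    using lip_borel[OF S_lip] E0 by (simp add: measurable_cong_sets[OF th_sets refl])
  have S_lim: "(\<lambda>j. S j x) \<longlonglongrightarrow> 0" for x
  proof (rule LIMSEQ_I)
    fix r :: real assume r: "r > 0"
    have r2: "r / 2 > 0" using r by simp
    obtain N where N0: "\<forall>j\<ge>N. \<forall>t\<in>{0..T}. dist (g (\<rho> j) t x) (h t x) < r / 2"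
      using unif[OF r2, of x] by blast
    have N: "\<And>j t. j \<ge> N \<Longrightarrow> t \<in> {0..T} \<Longrightarrow> dist (g (\<rho> j) t x) (h t x) < r / 2"
      using N0 by blast
    show "\<exists>no. \<forall>n\<ge>no. norm (S n x - 0) < r"
    proof (intro exI allI impI)
      fix n assume n: "n \<ge> N"
      have "S n x \<le> r / 2" unfolding S_def
        by (rule cSUP_least) (use T0 N[OF n] in \<open>auto intro: less_imp_le\<close>)
      then show "norm (S n x - 0) < r" using S0[of n x] r by simp
    qed
  qed
  have int_lim: "(\<lambda>j. \<integral>\<^sup>+ x. ennreal (S j x) \<partial>\<theta>) \<longlonglongrightarrow> 0"
  proof -
    have "(\<lambda>j. \<integral>\<^sup>+ x. ennreal (norm ((\<lambda>x. 0::real) x - S j x)) \<partial>\<theta>) \<longlonglongrightarrow> 0"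
    proof (rule nn_integral_dominated_convergence_norm[where w = "\<lambda>x. 2 * E * (1 + norm x)"])
      show "\<And>i. S i \<in> borel_measurable \<theta>" by (rule S_meas)
      show "(\<lambda>x. 0::real) \<in> borel_measurable \<theta>" by simp
      show "(\<lambda>x. 2 * E * (1 + norm x)) \<in> borel_measurable \<theta>" using intJ[of "2 * E"] by auto
      show "\<And>j. AE x in \<theta>. norm (S j x) \<le> 2 * E * (1 + norm x)" using S_bd S0 by auto
      have "(\<integral>\<^sup>+ x. ennreal (2 * E * (1 + norm x)) \<partial>\<theta>) = ennreal (integral\<^sup>L \<theta> (\<lambda>x. 2 * E * (1 + norm x)))"
        by (rule nn_integral_eq_integral[OF intJ]) (use E0 in auto)
      then show "(\<integral>\<^sup>+ x. ennreal (2 * E * (1 + norm x)) \<partial>\<theta>) < \<infinity>" by simp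
      show "AE x in \<theta>. (\<lambda>i. S i x) \<longlonglongrightarrow> 0" using S_lim by auto
    qed
    then show ?thesis using S0 by simp
  qed
  have sup_le: "(\<Squnion>t\<in>{0..T}. W1 (polygon F G \<theta> (Kj (\<rho> j)) (Pj (\<rho> j)) t) (\<mu> t)) \<le> (\<integral>\<^sup>+ x. ennreal (S j x) \<partial>\<theta>)" for j
  proof (rule SUP_least)
    fix t assume t: "t \<in> {0..T}"
    have "W1 (polygon F G \<theta> (Kj (\<rho> j)) (Pj (\<rho> j)) t) (\<mu> t) = W1 (distr \<theta> borel (g (\<rho> j) t)) (distr \<theta> borel (h t))"
      unfolding \<mu>_def g_def poly_eq[OF part t] ..
    also have "\<dots> \<le> (\<integral>\<^sup>+ x. ennreal (dist (g (\<rho> j) t x) (h t x)) \<partial>\<theta>)"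
      by (rule W1_distr_le[OF th_sets gm[OF t] hm[OF t]])
    also have "\<dots> \<le> (\<integral>\<^sup>+ x. ennreal (S j x) \<partial>\<theta>)"
      by (intro nn_integral_mono ennreal_leI le_S t)
    finally show "W1 (polygon F G \<theta> (Kj (\<rho> j)) (Pj (\<rho> j)) t) (\<mu> t) \<le> (\<integral>\<^sup>+ x. ennreal (S j x) \<partial>\<theta>)" .
  qed
  have sup_lim: "(\<lambda>j. \<Squnion>t\<in>{0..T}. W1 (polygon F G \<theta> (Kj (\<rho> j)) (Pj (\<rho> j)) t) (\<mu> t)) \<longlonglongrightarrow> 0"
    by (rule tendsto_sandwich[OF _ _ tendsto_const int_lim]) (use sup_le in \<open>auto intro: always_eventually\<close>)
  have diam_lim': "(\<lambda>j. diam (Kj (\<rho> j)) (Pj (\<rho> j))) \<longlonglongrightarrow> 0"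
    using LIMSEQ_subseq_LIMSEQ[OF diam_lim rho] by (simp add: diam comp_def)
  have "\<mu> \<in> sampling_solutions F G \<theta> T"
    unfolding sampling_solutions_def mem_Collect_eq
    by (rule conjI[OF CP], rule exI[where x="\<lambda>j. Kj (\<rho> j)"], rule exI[where x="\<lambda>j. Pj (\<rho> j)"])
      (intro conjI allI part diam_lim' sup_lim)
  then show ?thesis by blast
qed

end

theorem proposition2:
  fixes f :: "'a::euclidean_space \<Rightarrow> 'a" and v :: "'a \<Rightarrow> 'b::euclidean_space \<Rightarrow> 'a"
    and U :: "'b set" and T :: real and C :: real and \<theta> :: "'a measure"
  assumes T: "T > 0"
    and U: "compact U"
    and H1_cont: "continuous_on (UNIV \<times> U) (\<lambda>(x, u). f x + v x u)"
    and C: "C > 0"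
    and H1_growth: "\<forall>u\<in>U. \<forall>x. norm (f x + v x u) \<le> C * (1 + norm x)"
    and H1_lip: "\<forall>u\<in>U. \<forall>x y. norm ((f x + v x u) - (f y + v y u)) \<le> C * norm (x - y)"
    and theta: "\<theta> \<in> P1"
  shows "(\<forall>u :: real \<Rightarrow> 'a measure \<Rightarrow> 'b.
            (\<forall>t\<in>{0..T}. \<forall>\<mu>\<in>space (prob_algebra borel). u t \<mu> \<in> U) \<longrightarrow>
            S1 (\<lambda>x w. f x + v x w) u \<theta> T \<noteq> {})
       \<and> (\<forall>uu :: real \<Rightarrow> 'a measure \<Rightarrow> (real \<Rightarrow> 'b).
            (\<lambda>(t, \<mu>). uu t \<mu>) \<in> measurable (restrict_space borel {0..T} \<Otimes>\<^sub>M prob_algebra borel) (ctrl_alg T U) \<longrightarrow>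
            S2 (\<lambda>x w. f x + v x w) uu \<theta> T \<noteq> {})"
proof -
  have ode: "odesys (\<lambda>x w. f x + v x w) U C"
    by unfold_locales (use H1_cont C H1_growth H1_lip in auto)
  show ?thesis
  proof (intro conjI allI impI)
    fix u :: "real \<Rightarrow> 'a measure \<Rightarrow> 'b"
    assume u: "\<forall>t\<in>{0..T}. \<forall>\<mu>\<in>space (prob_algebra borel). u t \<mu> \<in> U"
    have "sampsys (\<lambda>x w. f x + v x w) U C T (\<lambda>t \<mu> s. u t \<mu>) \<theta>"
    proof (rule sampsys.intro[OF ode], unfold_locales)
      show "T > 0" by (rule T)
      show "\<theta> \<in> P1" by (rule theta)
      fix t and \<mu> :: "'a measure" assume "t \<in> {0..T}" "\<mu> \<in> space (prob_algebra borel)"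
      then show "(\<lambda>s. u t \<mu>) \<in> ctrl_space T U" using u unfolding ctrl_space_def by auto
    qed
    then interpret sampsys "\<lambda>x w. f x + v x w" U C T "\<lambda>t \<mu> s. u t \<mu>" \<theta> .
    show "S1 (\<lambda>x w. f x + v x w) u \<theta> T \<noteq> {}" unfolding S1_def by (rule exists_solution)
  next
    fix uu :: "real \<Rightarrow> 'a measure \<Rightarrow> (real \<Rightarrow> 'b)"
    assume m: "(\<lambda>(t, \<mu>). uu t \<mu>) \<in> measurable (restrict_space borel {0..T} \<Otimes>\<^sub>M prob_algebra borel) (ctrl_alg T U)"
    have "sampsys (\<lambda>x w. f x + v x w) U C T uu \<theta>"
    proof (rule sampsys.intro[OF ode], unfold_locales)
      show "T > 0" by (rule T)
      show "\<theta> \<in> P1" by (rule theta)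
      fix t and \<mu> :: "'a measure" assume t: "t \<in> {0..T}" and mu: "\<mu> \<in> space (prob_algebra borel)"
      have "(t, \<mu>) \<in> space (restrict_space borel {0..T} \<Otimes>\<^sub>M prob_algebra borel)"
        using t mu by (simp add: space_pair_measure)
      from measurable_space[OF m this] have "uu t \<mu> \<in> space (ctrl_alg T U)" by simp
      then show "uu t \<mu> \<in> ctrl_space T U" unfolding ctrl_alg_def by (simp add: space_measure_of_conv)
    qed
    then interpret sampsys "\<lambda>x w. f x + v x w" U C T uu \<theta> .
    show "S2 (\<lambda>x w. f x + v x w) uu \<theta> T \<noteq> {}" unfolding S2_def by (rule exists_solution)
  qed
qed

end
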